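(* Let $\tilde L(\lambda)=\lambda^2I+\lambda D+\tilde A\in\mathcal{L}(H_1,H_{-1})$, $\lambda\in\mathbb{C}$. (1) Under the hypotheses of Theorem 1 — (A), (B), and for some $k\in(0,\beta)$, $m\in(0,1]$, $\omega_1=\inf_{x\in H_1,x\ne0}\bigl[\frac1k(D_1x,x)_{-1,1}-\|x\|^2-\frac1{4m}\|(\frac1k\tilde S-D_2)x\|_{-1}^2\bigr]/\|x\|^2\ge0$ — with $\theta=\min\{\omega_1/2,(1-m)/\omega_2\}$, the spectrum of $\tilde L$ satisfies $\sigma(\tilde L)\subseteq\{\lambda\in\mathbb{C}:\mathrm{Re}\,\lambda\le-k\theta\}$. (2) Under the hypotheses of Theorem 2 — (A), (C), and for some $k\in(0,\beta)$, $p,q>0$ with $p+q\le1$, $\omega_1'=a_0(\delta/k-\|\tilde S\|^2/(4pk^2)-\|D_2\|^2/(4q))\ge1$ — with $\theta'=\min\{(\omega_1'-1)/2,(1-p-q)/\omega_2\}$, one has $\sigma(\tilde L)\subseteq\{\lambda\in\mathbb{C}:\mathrm{Re}\,\lambda\le-k\theta'\}$.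
   Context: $H$ is a complex Hilbert space with inner product $(\cdot,\cdot)$ and norm $\|\cdot\|$; $\mathcal{L}(X,Y)$ denotes bounded operators from $X$ to $Y$. Assumption (A): $A:\mathrm{Dom}(A)\subset H\to H$ is m-sectorial (densely defined, numerical range in a sector $\{|\mathrm{Im}\,z|\le\tan(\omega)\,\mathrm{Re}\,z\}$ for some $\omega\in[0,\pi/2)$, no proper sectorial extension), and $\mathrm{Re}(Ax,x)\ge a_0\|x\|^2$ for some $a_0>0$ and all $x\in\mathrm{Dom}(A)$. Then there are a self-adjoint positive definite $T$ (with $T\ge a_0$) and a bounded self-adjoint $S$ on $H$ with $A=T^{1/2}(I+iS)T^{1/2}$. For $s\ge0$, $H_s=\mathrm{Dom}(T^{s/2})$ with norm $\|x\|_s=\|T^{s/2}x\|$; for $s<0$, $H_s$ is the completion of $H$ in $\|x\|_s=\|T^{s/2}x\|$. $(\cdot,\cdot)_{-1,1}$ is the duality pairing on $H_{-1}\times H_1$ extending $(\cdot,\cdot)$. $\tilde A\in\mathcal{L}(H_1,H_{-1})$ is the continuous extension of $A$; $\tilde S=T^{1/2}ST^{1/2}\in\mathcal{L}(H_1,H_{-1})$. Assumption (B): $D\in\mathcal{L}(H_1,H_{-1})$ and $\beta=\inf_{x\in H_1,x\ne0}\mathrm{Re}(Dx,x)_{-1,1}/\|x\|^2>0$. Assumption (C): $D\in\mathcal{L}(H_1,H_{-1})$ and $\delta=\inf_{x\in H_1,x\ne0}\mathrm{Re}(Dx,x)_{-1,1}/\|x\|_1^2>0$ (this implies (B)). Put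 $D'=T^{-1/2}DT^{-1/2}\in\mathcal{L}(H)$, $D_1=\tfrac12T^{1/2}(D'+D'^* )T^{1/2}$, $D_2=\tfrac1{2i}T^{1/2}(D'-D'^* )T^{1/2}$. $\|\tilde S\|$, $\|D_2\|$ are norms in $\mathcal{L}(H_1,H_{-1})$. $\omega_2=\sup_{x\in H_1,x\ne0}[\|x\|_1^2+k(D_1x,x)_{-1,1}+k^2\|x\|^2]/\|x\|_1^2$. The resolvent set of the pencil is $\rho(\tilde L)=\{\lambda\in\mathbb{C}: \tilde L(\lambda)^{-1}\text{ exists in }\mathcal{L}(H_{-1},H_1)\}$ and $\sigma(\tilde L)=\mathbb{C}\setminus\rho(\tilde L)$. *)

theory Defs
  imports "HOL-Analysis.Analysis"
begin

text \<open>HOL has no complex vector spaces; we add complex scalar multiplication and a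
complex inner product (linear in the first argument) on top of a real inner product
space, compatible with the real structure. A complex Hilbert space is a type of class
complex_inner and complete_space.\<close>

class complex_inner = real_inner +
  fixes scaleC :: "complex \<Rightarrow> 'a \<Rightarrow> 'a"
  fixes cinner :: "'a \<Rightarrow> 'a \<Rightarrow> complex"
  assumes scaleC_add_right: "scaleC a (x + y) = scaleC a x + scaleC a y"
    and scaleC_add_left: "scaleC (a + b) x = scaleC a x + scaleC b x"
    and scaleC_scaleC: "scaleC a (scaleC b x) = scaleC (a * b) x"
    and scaleC_one: "scaleC 1 x = x"
    and scaleR_scaleC: "scaleR r x = scaleC (complex_of_real r) x"
    and cinner_add_left: "cinner (x + y) z = cinner x z + cinner y z"
    and cinner_scaleC_left: "cinner (scaleC a x) y = a * cinner x y"
    and cinner_commute: "cinner y x = cnj (cinner x y)"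
    and Re_cinner: "Re (cinner x y) = inner x y"

definition csubspace :: "'a::complex_inner set \<Rightarrow> bool" where
  "csubspace U \<longleftrightarrow> 0 \<in> U \<and> (\<forall>x\<in>U. \<forall>y\<in>U. x + y \<in> U) \<and> (\<forall>c. \<forall>x\<in>U. scaleC c x \<in> U)"

text \<open>A (possibly unbounded) linear operator is a pair (domain, function).\<close>
definition clinear_on :: "'a::complex_inner set \<Rightarrow> ('a \<Rightarrow> 'b::complex_inner) \<Rightarrow> bool" where
  "clinear_on U f \<longleftrightarrow> csubspace U \<and> (\<forall>x\<in>U. \<forall>y\<in>U. f (x + y) = f x + f y)
      \<and> (\<forall>c. \<forall>x\<in>U. f (scaleC c x) = scaleC c (f x))"

definition bounded_clinear_op :: "('a::complex_inner \<Rightarrow> 'a) \<Rightarrow> bool" where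
  "bounded_clinear_op f \<longleftrightarrow> clinear_on UNIV f \<and> (\<exists>K. \<forall>x. norm (f x) \<le> K * norm x)"

definition bounded_selfadjoint :: "('a::complex_inner \<Rightarrow> 'a) \<Rightarrow> bool" where
  "bounded_selfadjoint S \<longleftrightarrow> bounded_clinear_op S \<and> (\<forall>x y. cinner (S x) y = cinner x (S y))"

definition cadj :: "('a::complex_inner \<Rightarrow> 'a) \<Rightarrow> 'a \<Rightarrow> 'a" where
  "cadj f y = (THE z. \<forall>x. cinner (f x) y = cinner x z)"

definition selfadjoint_op :: "'a::complex_inner set \<Rightarrow> ('a \<Rightarrow> 'a) \<Rightarrow> bool" where
  "selfadjoint_op DR R \<longleftrightarrow> clinear_on DR R \<and> closure DR = UNIV
     \<and> (\<forall>x\<in>DR. \<forall>y\<in>DR. cinner (R x) y = cinner x (R y))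
     \<and> (\<forall>y z. (\<forall>x\<in>DR. cinner (R x) y = cinner x z) \<longrightarrow> y \<in> DR)"

definition nonneg_op :: "'a::complex_inner set \<Rightarrow> ('a \<Rightarrow> 'a) \<Rightarrow> bool" where
  "nonneg_op DR R \<longleftrightarrow> (\<forall>x\<in>DR. 0 \<le> Re (cinner (R x) x))"

definition is_op_sqrt :: "'a::complex_inner set \<Rightarrow> ('a \<Rightarrow> 'a) \<Rightarrow> 'a set \<Rightarrow> ('a \<Rightarrow> 'a) \<Rightarrow> bool" where
  "is_op_sqrt DT T DR R \<longleftrightarrow> selfadjoint_op DR R \<and> nonneg_op DR R
     \<and> DT = {x \<in> DR. R x \<in> DR} \<and> (\<forall>x\<in>DT. T x = R (R x))"

definition sectorial_op :: "'a::complex_inner set \<Rightarrow> ('a \<Rightarrow> 'a) \<Rightarrow> real \<Rightarrow> bool" where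
  "sectorial_op DA A \<omega> \<longleftrightarrow> 0 \<le> \<omega> \<and> \<omega> < pi / 2
     \<and> (\<forall>x\<in>DA. \<bar>Im (cinner (A x) x)\<bar> \<le> tan \<omega> * Re (cinner (A x) x))"

definition m_sectorial :: "'a::complex_inner set \<Rightarrow> ('a \<Rightarrow> 'a) \<Rightarrow> bool" where
  "m_sectorial DA A \<longleftrightarrow> clinear_on DA A \<and> closure DA = UNIV \<and> (\<exists>\<omega>. sectorial_op DA A \<omega>)
     \<and> \<not> (\<exists>DB B \<omega>'. DA \<subset> DB \<and> clinear_on DB B \<and> (\<forall>x\<in>DA. B x = A x) \<and> sectorial_op DB B \<omega>')"

text \<open>Model: R = T^(1/2) with domain DR = H_1, norm_1 x = norm (R x).
An element z of H_{-1} is represented by w = T^(-1/2) z in H (the extension of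
T^(-1/2) is a unitary map H_{-1} -> H); thus norm_{-1} z = norm w and
(z, x)_{-1,1} = cinner w (R x).  An operator D in L(H_1,H_{-1}) is represented by
Dr : DR -> H with Dr x = T^(-1/2) (D x); then D' = T^(-1/2) D T^(-1/2) = Dr o R^(-1).\<close>

definition rinv :: "'a set \<Rightarrow> ('a \<Rightarrow> 'a) \<Rightarrow> 'a \<Rightarrow> 'a" where
  "rinv DR R y = (THE x. x \<in> DR \<and> R x = y)"

definition bounded_1_m1 :: "'a::complex_inner set \<Rightarrow> ('a \<Rightarrow> 'a) \<Rightarrow> ('a \<Rightarrow> 'a) \<Rightarrow> bool" where
  "bounded_1_m1 DR R Dr \<longleftrightarrow> clinear_on DR Dr \<and> (\<exists>C. \<forall>x\<in>DR. norm (Dr x) \<le> C * norm (R x))"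

definition Dprime :: "'a set \<Rightarrow> ('a \<Rightarrow> 'a) \<Rightarrow> ('a \<Rightarrow> 'a) \<Rightarrow> 'a \<Rightarrow> 'a" where
  "Dprime DR R Dr y = Dr (rinv DR R y)"

text \<open>Representatives of D_1 x and D_2 x: D_1 x ~ (D'+D'^*)/2 (R x), D_2 x ~ (D'-D'^*)/(2i) (R x).\<close>
definition D1rep :: "'a::complex_inner set \<Rightarrow> ('a \<Rightarrow> 'a) \<Rightarrow> ('a \<Rightarrow> 'a) \<Rightarrow> 'a \<Rightarrow> 'a" where
  "D1rep DR R Dr x = scaleC (1/2) (Dprime DR R Dr (R x) + cadj (Dprime DR R Dr) (R x))"

definition D2rep :: "'a::complex_inner set \<Rightarrow> ('a \<Rightarrow> 'a) \<Rightarrow> ('a \<Rightarrow> 'a) \<Rightarrow> 'a \<Rightarrow> 'a" where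
  "D2rep DR R Dr x = scaleC (1 / (2 * \<i>)) (Dprime DR R Dr (R x) - cadj (Dprime DR R Dr) (R x))"

text \<open>beta = inf Re(Dx,x)_{-1,1} / norm x ^2 (extended real, so that -infinity is possible).\<close>
definition beta_D :: "'a::complex_inner set \<Rightarrow> ('a \<Rightarrow> 'a) \<Rightarrow> ('a \<Rightarrow> 'a) \<Rightarrow> ereal" where
  "beta_D DR R Dr = (INF x\<in>DR - {0}. ereal (Re (cinner (Dr x) (R x)) / (norm x)^2))"

definition delta_D :: "'a::complex_inner set \<Rightarrow> ('a \<Rightarrow> 'a) \<Rightarrow> ('a \<Rightarrow> 'a) \<Rightarrow> ereal" where
  "delta_D DR R Dr = (INF x\<in>DR - {0}. ereal (Re (cinner (Dr x) (R x)) / (norm (R x))^2))"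

definition omega1 :: "'a::complex_inner set \<Rightarrow> ('a \<Rightarrow> 'a) \<Rightarrow> ('a \<Rightarrow> 'a) \<Rightarrow> ('a \<Rightarrow> 'a) \<Rightarrow> real \<Rightarrow> real \<Rightarrow> ereal" where
  "omega1 DR R S Dr k m = (INF x\<in>DR - {0}. ereal
     ((Re (cinner (D1rep DR R Dr x) (R x)) / k - (norm x)^2
        - (norm (scaleC (complex_of_real (1/k)) (S (R x)) - D2rep DR R Dr x))^2 / (4 * m))
      / (norm x)^2))"

definition omega2 :: "'a::complex_inner set \<Rightarrow> ('a \<Rightarrow> 'a) \<Rightarrow> ('a \<Rightarrow> 'a) \<Rightarrow> real \<Rightarrow> real" where
  "omega2 DR R Dr k = Sup {((norm (R x))^2 + k * Re (cinner (D1rep DR R Dr x) (R x)) + k^2 * (norm x)^2)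
                             / (norm (R x))^2 | x. x \<in> DR \<and> x \<noteq> 0}"

text \<open>Norm of S~ = T^(1/2) S T^(1/2) and of D_2 in L(H_1,H_{-1}).\<close>
definition norm_Stilde :: "'a::complex_inner set \<Rightarrow> ('a \<Rightarrow> 'a) \<Rightarrow> ('a \<Rightarrow> 'a) \<Rightarrow> real" where
  "norm_Stilde DR R S = Sup {norm (S (R x)) / norm (R x) | x. x \<in> DR \<and> x \<noteq> 0}"

definition norm_D2 :: "'a::complex_inner set \<Rightarrow> ('a \<Rightarrow> 'a) \<Rightarrow> ('a \<Rightarrow> 'a) \<Rightarrow> real" where
  "norm_D2 DR R Dr = Sup {norm (D2rep DR R Dr x) / norm (R x) | x. x \<in> DR \<and> x \<noteq> 0}"

text \<open>Representative of L~(lambda) x = lambda^2 x + lambda D x + A~ x, for x in H_1: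
the representative of x in H_{-1} is T^(-1/2) x, and A~ x ~ (I + i S) R x.\<close>
definition pencil_rep :: "'a::complex_inner set \<Rightarrow> ('a \<Rightarrow> 'a) \<Rightarrow> ('a \<Rightarrow> 'a) \<Rightarrow> ('a \<Rightarrow> 'a) \<Rightarrow> complex \<Rightarrow> 'a \<Rightarrow> 'a" where
  "pencil_rep DR R S Dr z x = scaleC (z^2) (rinv DR R x) + scaleC z (Dr x) + (R x + scaleC \<i> (S (R x)))"

text \<open>lambda in the resolvent set: L~(lambda) has an inverse in L(H_{-1},H_1).\<close>
definition pencil_resolvent :: "'a::complex_inner set \<Rightarrow> ('a \<Rightarrow> 'a) \<Rightarrow> ('a \<Rightarrow> 'a) \<Rightarrow> ('a \<Rightarrow> 'a) \<Rightarrow> complex set" where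
  "pencil_resolvent DR R S Dr = {z. \<exists>M. (\<forall>w. M w \<in> DR) \<and> clinear_on UNIV M
      \<and> (\<exists>C. \<forall>w. norm (R (M w)) \<le> C * norm w)
      \<and> (\<forall>w. pencil_rep DR R S Dr z (M w) = w)
      \<and> (\<forall>x\<in>DR. M (pencil_rep DR R S Dr z x) = x)}"

definition pencil_spectrum :: "'a::complex_inner set \<Rightarrow> ('a \<Rightarrow> 'a) \<Rightarrow> ('a \<Rightarrow> 'a) \<Rightarrow> ('a \<Rightarrow> 'a) \<Rightarrow> complex set" where
  "pencil_spectrum DR R S Dr = UNIV - pencil_resolvent DR R S Dr"

end

theory Submission
  imports Defs
begin


lemma parallelogram:
  fixes a b :: "'a::real_inner"
  shows "(norm (a + b))^2 + (norm (a - b))^2 = 2 * (norm a)^2 + 2 * (norm b)^2"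
  by (simp add: power2_norm_eq_inner inner_add inner_diff inner_commute)

lemma closed_subspace_full:
  fixes V :: "'a::{real_inner, complete_space} set"
  assumes cl: "closed V" and z: "0 \<in> V" and ad: "\<forall>x\<in>V. \<forall>y\<in>V. x + y \<in> V"
    and sc: "\<forall>r. \<forall>x\<in>V. scaleR r x \<in> V"
    and orth: "\<forall>w. (\<forall>v\<in>V. inner v w = 0) \<longrightarrow> w = 0"
  shows "V = UNIV"
proof (rule ccontr)
  assume "V \<noteq> UNIV"
  then obtain y where yV: "y \<notin> V" by auto
  define F where "F = (\<lambda>v. (norm (y - v))^2) ` V"
  define d where "d = Inf F"
  have Fne: "F \<noteq> {}" using z by (auto simp: F_def)
  have Fb: "bdd_below F" unfolding F_def by (rule bdd_belowI[of _ 0]) auto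
  have dle: "d \<le> (norm (y - v))^2" if "v \<in> V" for v
    unfolding d_def F_def using Fb that by (auto intro!: cInf_lower simp: F_def)
  have d0: "0 \<le> d" unfolding d_def using Fne by (auto intro!: cInf_greatest simp: F_def)
  have "\<exists>v\<in>V. (norm (y - v))^2 < d + 1 / (Suc n)" for n
  proof -
    have "d < d + 1 / Suc n" by simp
    then obtain f where "f \<in> F" "f < d + 1 / Suc n"
      using cInf_lessD[OF Fne] unfolding d_def by blast
    then show ?thesis by (auto simp: F_def)
  qed
  then obtain v where vV: "\<And>n. v n \<in> V" and vd: "\<And>n. (norm (y - v n))^2 < d + 1 / Suc n"
    by metis
  have mid: "(norm (v n - v m))^2 \<le> 2 / Suc n + 2 / Suc m" for n m
  proof -
    have "scaleR (1/2) (v n + v m) \<in> V" using vV ad sc by auto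
    then have "d \<le> (norm (y - scaleR (1/2) (v n + v m)))^2" by (rule dle)
    also have "y - scaleR (1/2) (v n + v m) = scaleR (1/2) ((y - v n) + (y - v m))"
      by (simp add: algebra_simps flip: scaleR_add_left)
    finally have h: "4 * d \<le> (norm ((y - v n) + (y - v m)))^2"
      by (simp add: power_mult_distrib power2_eq_square)
    have e: "(y - v n) - (y - v m) = v m - v n" by simp
    have "(norm (v n - v m))^2 = (norm (v m - v n))^2" by (simp add: norm_minus_commute)
    also have "\<dots> = 2 * (norm (y - v n))^2 + 2 * (norm (y - v m))^2 - (norm ((y - v n) + (y - v m)))^2"
      using parallelogram[of "y - v n" "y - v m"] e by simp
    also have "\<dots> \<le> 2 / Suc n + 2 / Suc m"
      using h vd[of n] vd[of m] by simp
    finally show ?thesis .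
  qed
  have "Cauchy v"
  proof (rule CauchyI)
    fix e :: real assume e: "0 < e"
    obtain M :: nat where M: "4 / e^2 < M" using reals_Archimedean2 by blast
    have "0 < e^2" using e by simp
    then have M': "4 / Suc M < e^2" using M by (simp add: field_simps) (smt (verit) \<open>0 < e^2\<close>)
    show "\<exists>M. \<forall>m\<ge>M. \<forall>n\<ge>M. norm (v m - v n) < e"
    proof (intro exI allI impI)
      fix m n assume mn: "M \<le> m" "M \<le> n"
      have "2 / Suc m \<le> 2 / Suc M" "2 / Suc n \<le> 2 / Suc M"
        using mn by (auto intro!: divide_left_mono)
      then have "(norm (v m - v n))^2 < e^2" using mid[of m n] M' by simp
      then show "norm (v m - v n) < e" using e by (simp add: power_less_imp_less_base)
    qed
  qed
  then obtain p where vp: "v \<longlonglongrightarrow> p" using convergent_eq_Cauchy by blast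
  have pV: "p \<in> V" using closed_sequentially[OF cl] vV vp by blast
  have "(\<lambda>n. (norm (y - v n))^2) \<longlonglongrightarrow> (norm (y - p))^2"
    by (intro tendsto_intros vp)
  moreover have "(\<lambda>n. d + 1 / Suc n) \<longlonglongrightarrow> d + 0"
    by (intro tendsto_intros LIMSEQ_inverse_real_of_nat[unfolded inverse_eq_divide])
  ultimately have "(norm (y - p))^2 \<le> d + 0"
    using vd by (intro LIMSEQ_le) (auto intro: less_imp_le)
  then have pd: "(norm (y - p))^2 \<le> d" by simp
  define w where "w = y - p"
  have "inner u w = 0" if uV: "u \<in> V" for u
  proof -
    have key: "0 \<le> t^2 * (norm u)^2 - 2 * t * inner u w" for t
    proof -
      have "p + scaleR t u \<in> V" using uV pV ad sc by auto
      then have "d \<le> (norm (y - (p + scaleR t u)))^2" by (rule dle)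
      also have "y - (p + scaleR t u) = w - scaleR t u" by (simp add: w_def)
      also have "(norm (w - scaleR t u))^2 = (norm w)^2 - 2 * t * inner u w + t^2 * (norm u)^2"
        by (simp only: power2_norm_eq_inner) (simp add: inner_diff inner_commute power2_eq_square algebra_simps)
      finally show ?thesis using pd by (simp add: w_def)
    qed
    show ?thesis
    proof (cases "u = 0")
      case True then show ?thesis by simp
    next
      case False
      then have nu: "0 < (norm u)^2" by simp
      have "0 \<le> (inner u w / (norm u)^2)^2 * (norm u)^2 - 2 * (inner u w / (norm u)^2) * inner u w"
        by (rule key)
      also have "\<dots> = - ((inner u w)^2) / (norm u)^2"
        using nu by (simp add: field_simps power2_eq_square)
      finally have "(inner u w)^2 \<le> 0" using nu by (simp add: divide_le_0_iff)
      then show ?thesis by simp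
    qed
  qed
  then have "w = 0" using orth by blast
  then show False using yV pV by (simp add: w_def)
qed





lemma scaleC_zero_left[simp]: "scaleC 0 (x::'a::complex_inner) = 0"
  using scaleR_scaleC[of 0 x] by simp

lemma scaleC_zero_right[simp]: "scaleC a 0 = 0"
  using scaleC_add_right[of a 0 0] by simp

lemma scaleC_minus_left: "scaleC (-a) x = - scaleC a x"
  using scaleC_add_left[of a "-a" x] by (simp add: add_eq_0_iff)

lemma scaleC_minus_right: "scaleC a (-x) = - scaleC a x"
  using scaleC_add_right[of a x "-x"] by (simp add: add_eq_0_iff)

lemma scaleC_diff_right: "scaleC a (x - y) = scaleC a x - scaleC a y"
  using scaleC_add_right[of a x "-y"] scaleC_minus_right by simp

lemma scaleC_diff_left: "scaleC (a - b) x = scaleC a x - scaleC b x"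
  using scaleC_add_left[of a "-b" x] scaleC_minus_left by simp

lemma scaleC_of_real: "scaleC (complex_of_real r) x = scaleR r x"
  by (simp add: scaleR_scaleC)

lemma cinner_zero_left[simp]: "cinner 0 y = 0"
  using cinner_add_left[of 0 0 y] by simp

lemma cinner_add_right: "cinner x (y + z) = cinner x y + cinner x z"
  using cinner_add_left[of y z x] cinner_commute[of x] cinner_commute[of x y] cinner_commute[of x z]
  by (metis complex_cnj_add)

lemma cinner_scaleC_right: "cinner x (scaleC a y) = cnj a * cinner x y"
  by (metis cinner_commute cinner_scaleC_left complex_cnj_mult)

lemma cinner_zero_right[simp]: "cinner x 0 = 0"
  by (metis cinner_commute cinner_zero_left complex_cnj_zero)

lemma cinner_minus_left: "cinner (- x) y = - cinner x y"
  using cinner_add_left[of x "-x" y] by (simp add: add_eq_0_iff)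

lemma cinner_minus_right: "cinner x (- y) = - cinner x y"
  using cinner_add_right[of x y "-y"] by (simp add: add_eq_0_iff)

lemma cinner_diff_left: "cinner (x - y) z = cinner x z - cinner y z"
  using cinner_add_left[of x "-y" z] cinner_minus_left by simp

lemma cinner_diff_right: "cinner x (y - z) = cinner x y - cinner x z"
  using cinner_add_right[of x y "-z"] cinner_minus_right by simp

lemma Im_cinner_self[simp]: "Im (cinner x x) = 0"
  using cinner_commute[of x x] by (metis Im_complex_of_real Reals_cnj_iff complex_is_Real_iff)

lemma Re_cinner_self: "Re (cinner x x) = (norm x)^2"
  by (simp add: Re_cinner power2_norm_eq_inner)

lemma cinner_self: "cinner x x = complex_of_real ((norm x)^2)"
  by (simp add: complex_eq_iff Re_cinner_self)

lemma norm_scaleC: "norm (scaleC a x) = cmod a * norm x"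
proof -
  have "(norm (scaleC a x))^2 = Re (cinner (scaleC a x) (scaleC a x))" by (simp add: Re_cinner_self)
  also have "\<dots> = Re (a * cnj a * cinner x x)" by (simp add: cinner_scaleC_left cinner_scaleC_right mult.assoc)
  also have "\<dots> = (cmod a)^2 * (norm x)^2"
    by (simp add: cinner_self complex_mult_cnj cmod_power2)
  finally have "(norm (scaleC a x))^2 = (cmod a * norm x)^2" by (simp add: power_mult_distrib)
  then show ?thesis by (simp add: power2_eq_iff_nonneg)
qed

lemma cinner_cs: "cmod (cinner x y) \<le> norm x * norm y"
proof (cases "cinner x y = 0")
  case True then show ?thesis by simp
next
  case False
  define u where "u = cnj (cinner x y) / cmod (cinner x y)"
  have cu: "cmod u = 1" using False by (simp add: u_def norm_divide)
  have "cinner (scaleC u x) y = u * cinner x y" by (simp add: cinner_scaleC_left)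
  also have "\<dots> = complex_of_real (cmod (cinner x y))"
    using False by (simp add: u_def complex_norm_square[symmetric] power2_eq_square field_simps)
  finally have e: "cmod (cinner x y) = Re (cinner (scaleC u x) y)" by simp
  also have "\<dots> = inner (scaleC u x) y" by (simp add: Re_cinner)
  also have "\<dots> \<le> norm (scaleC u x) * norm y" by (rule norm_cauchy_schwarz)
  also have "\<dots> = norm x * norm y" by (simp add: norm_scaleC cu)
  finally show ?thesis .
qed

lemma cinner_eq_zero_iff_all: "(\<forall>x. cinner x z = 0) \<Longrightarrow> z = 0"
  using cinner_self[of z] by simp




lemma cinner_cs': "cmod (cinner a x) \<le> norm x * norm a"
  using cinner_cs[of a x] by (simp add: mult.commute)

lemma bl_cinner_left: "bounded_linear (\<lambda>x. cinner x a)"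
  by (rule bounded_linear_intro[where K="norm a"])
    (auto simp: cinner_add_left scaleR_scaleC cinner_scaleC_left scaleR_conv_of_real cinner_cs)

lemma bl_cinner_right: "bounded_linear (\<lambda>x. cinner a x)"
  by (rule bounded_linear_intro[where K="norm a"])
    (auto simp: cinner_add_right scaleR_scaleC cinner_scaleC_right scaleR_conv_of_real cinner_cs')

lemma cinner_orth_dense:
  fixes e :: "'a::complex_inner"
  assumes "closure D = UNIV" "\<forall>v\<in>D. cinner v e = 0"
  shows "e = 0"
proof -
  have "closed {v. cinner v e = 0}"
    by (intro closed_Collect_eq continuous_on_const linear_continuous_on bl_cinner_left)
  then have "closure D \<subseteq> {v. cinner v e = 0}" using assms(2) by (intro closure_minimal) auto
  then have "cinner e e = 0" using assms(1) by auto
  then show ?thesis by (simp add: cinner_self)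
qed

lemma inner_scaleC_i: "inner (scaleC \<i> v) w = - Im (cinner v w)"
  by (simp flip: Re_cinner add: cinner_scaleC_left)

lemma cinner_zero_from_inner:
  assumes "inner v w = 0" "inner (scaleC \<i> v) w = 0"
  shows "cinner v w = 0"
  using assms inner_scaleC_i[of v w] by (simp add: complex_eq_iff Re_cinner)

lemma riesz:
  fixes \<phi> :: "'a::{complex_inner,complete_space} \<Rightarrow> complex"
  assumes add: "\<And>x y. \<phi> (x + y) = \<phi> x + \<phi> y" and hom: "\<And>c x. \<phi> (scaleC c x) = c * \<phi> x"
    and bd: "\<And>x. cmod (\<phi> x) \<le> K * norm x"
  shows "\<exists>z. \<forall>x. \<phi> x = cinner x z"
proof -
  define N where "N = {x. \<phi> x = 0}"
  have blp: "bounded_linear \<phi>"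
    by (rule bounded_linear_intro[where K=K]) (auto simp: add scaleR_scaleC hom scaleR_conv_of_real bd mult.commute)
  have z0: "\<phi> 0 = 0" using hom[of 0 0] by simp
  show ?thesis
  proof (cases "N = UNIV")
    case True then show ?thesis by (intro exI[of _ 0]) (auto simp: N_def)
  next
    case False
    have cl: "closed N" unfolding N_def
      by (intro closed_Collect_eq continuous_on_const linear_continuous_on blp)
    have "\<not> (\<forall>w. (\<forall>v\<in>N. inner v w = 0) \<longrightarrow> w = 0)"
    proof
      assume "\<forall>w. (\<forall>v\<in>N. inner v w = 0) \<longrightarrow> w = 0"
      then have "N = UNIV"
        using closed_subspace_full[OF cl] z0 add hom
        by (simp add: N_def scaleR_scaleC)
      then show False using False by simp
    qed
    then obtain w where wo: "\<forall>v\<in>N. inner v w = 0" and w0: "w \<noteq> 0" by blast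
    have co: "cinner v w = 0" if "v \<in> N" for v
    proof (rule cinner_zero_from_inner)
      show "inner v w = 0" using wo that by simp
      have "scaleC \<i> v \<in> N" using that hom by (simp add: N_def)
      then show "inner (scaleC \<i> v) w = 0" using wo by simp
    qed
    have pw: "\<phi> w \<noteq> 0"
    proof
      assume "\<phi> w = 0"
      then have "cinner w w = 0" using co by (simp add: N_def)
      then show False using w0 by (simp add: cinner_self)
    qed
    have nw: "(norm w)^2 \<noteq> 0" using w0 by simp
    define z where "z = scaleC (cnj (\<phi> w) / complex_of_real ((norm w)^2)) w"
    have "\<phi> x = cinner x z" for x
    proof -
      define u where "u = x - scaleC (\<phi> x / \<phi> w) w"
      have "\<phi> u = 0"
        using pw by (simp add: u_def diff_conv_add_uminus add hom scaleC_minus_left[symmetric])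
      then have "cinner u w = 0" using co by (simp add: N_def)
      then have e: "cinner x w = \<phi> x / \<phi> w * complex_of_real ((norm w)^2)"
        by (simp add: u_def cinner_diff_left cinner_scaleC_left cinner_self)
      have "cinner x z = \<phi> w / complex_of_real ((norm w)^2) * cinner x w"
        by (simp add: z_def cinner_scaleC_right)
      also have "\<dots> = \<phi> x" using e pw nw by (simp add: field_simps)
      finally show ?thesis by simp
    qed
    then show ?thesis by blast
  qed
qed

lemma cinner_right_unique:
  assumes "\<forall>x. cinner x z1 = cinner x z2" shows "z1 = z2"
proof -
  have "cinner (z1 - z2) (z1 - z2) = 0" using assms by (simp add: cinner_diff_right)
  then show ?thesis by (simp add: cinner_self)
qed

lemma cadj_prop:
  fixes f :: "'a::{complex_inner,complete_space} \<Rightarrow> 'a"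
  assumes add: "\<And>x y. f (x + y) = f x + f y" and hom: "\<And>c x. f (scaleC c x) = scaleC c (f x)"
    and bd: "\<And>x. norm (f x) \<le> K * norm x"
  shows "cinner (f x) y = cinner x (cadj f y)"
proof -
  have "\<exists>z. \<forall>x. cinner (f x) y = cinner x z"
  proof (rule riesz[where K="K * norm y"])
    show "cinner (f (a + b)) y = cinner (f a) y + cinner (f b) y" for a b by (simp add: add cinner_add_left)
    show "cinner (f (scaleC c a)) y = c * cinner (f a) y" for c a by (simp add: hom cinner_scaleC_left)
    show "cmod (cinner (f a) y) \<le> K * norm y * norm a" for a
    proof -
      have "cmod (cinner (f a) y) \<le> norm (f a) * norm y" by (rule cinner_cs)
      also have "\<dots> \<le> K * norm a * norm y" by (intro mult_right_mono bd) auto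
      finally show ?thesis by (simp add: ac_simps)
    qed
  qed
  then have "\<exists>!z. \<forall>x. cinner (f x) y = cinner x z"
    using cinner_right_unique by metis
  then have "\<forall>x. cinner (f x) y = cinner x (cadj f y)"
    unfolding cadj_def by (rule theI')
  then show ?thesis by blast
qed

lemma cadj_bound:
  fixes f :: "'a::{complex_inner,complete_space} \<Rightarrow> 'a"
  assumes add: "\<And>x y. f (x + y) = f x + f y" and hom: "\<And>c x. f (scaleC c x) = scaleC c (f x)"
    and bd: "\<And>x. norm (f x) \<le> K * norm x" and K: "K \<ge> 0"
  shows "norm (cadj f y) \<le> K * norm y"
proof -
  let ?u = "cadj f y"
  have "(norm ?u)^2 = Re (cinner ?u ?u)" by (simp add: Re_cinner_self)
  also have "cinner ?u ?u = cinner (f ?u) y" using cadj_prop[OF add hom bd] by simp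
  also have "Re (cinner (f ?u) y) \<le> norm (f ?u) * norm y"
    using cinner_cs[of "f ?u" y] complex_Re_le_cmod[of "cinner (f ?u) y"] by linarith
  also have "\<dots> \<le> K * norm ?u * norm y" by (intro mult_right_mono bd) auto
  finally have "norm ?u * norm ?u \<le> (K * norm y) * norm ?u" by (simp add: power2_eq_square ac_simps)
  then show ?thesis
    by (cases "norm ?u = 0") (auto simp: mult_le_cancel_right K)
qed

lemma bl_of_clinear:
  fixes f :: "'a::complex_inner \<Rightarrow> 'b::complex_inner"
  assumes add: "\<And>x y. f (x + y) = f x + f y" and hom: "\<And>c x. f (scaleC c x) = scaleC c (f x)"
    and bd: "\<And>x. norm (f x) \<le> K * norm x"
  shows "bounded_linear f"
proof (rule bounded_linear_intro[where K=K])
  show "f (x + y) = f x + f y" for x y by (rule add)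
  show "f (scaleR r x) = scaleR r (f x)" for r x using hom[of "complex_of_real r" x] by (simp add: scaleR_scaleC)
  show "norm (f x) \<le> norm x * K" for x using bd[of x] by (simp add: mult.commute)
qed

lemma coercive_surj:
  fixes F :: "'a::{complex_inner,complete_space} \<Rightarrow> 'a"
  assumes add: "\<And>x y. F (x + y) = F x + F y" and hom: "\<And>c x. F (scaleC c x) = scaleC c (F x)"
    and bd: "\<And>x. norm (F x) \<le> K * norm x"
    and c: "c > 0" and co: "\<And>x. c * (norm x)^2 \<le> Re (cinner (F x) x)"
  shows "\<exists>x. F x = w"
proof -
  have blF: "bounded_linear F" by (rule bl_of_clinear[OF add hom bd])
  have below: "c * norm x \<le> norm (F x)" for x
  proof -
    have "c * (norm x)^2 \<le> norm (F x) * norm x"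
      using co[of x] cinner_cs[of "F x" x] complex_Re_le_cmod[of "cinner (F x) x"] by linarith
    then have h: "c * norm x * norm x \<le> norm (F x) * norm x" by (simp add: power2_eq_square mult.assoc)
    show ?thesis
    proof (cases "norm x = 0")
      case True then show ?thesis by simp
    next
      case False then have "norm x > 0" by simp
      then show ?thesis using h mult_right_le_imp_le by blast
    qed
  qed
  have F0: "F 0 = 0" using hom[of 0 0] by simp
  have "range F = UNIV"
  proof (rule closed_subspace_full)
    show "closed (range F)"
    unfolding closed_sequential_limits
    proof (intro allI impI, elim conjE)
      fix y l assume yR: "\<forall>n. y n \<in> range F" and yl: "y \<longlonglongrightarrow> l"
      then have "\<forall>n. \<exists>u. y n = F u" by auto
      then obtain x where xy0: "\<forall>n. y n = F (x n)" by (auto dest!: choice)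
      then have xy: "\<And>n. y n = F (x n)" by blast
      have "Cauchy y" using yl LIMSEQ_imp_Cauchy by blast
      have "Cauchy x"
        unfolding Cauchy_iff
      proof (intro allI impI)
        fix e :: real assume e: "0 < e"
        have ce: "c * e > 0" using e c by simp
        obtain M where M: "\<forall>m\<ge>M. \<forall>n\<ge>M. norm (y m - y n) < c * e"
          using \<open>Cauchy y\<close> ce unfolding Cauchy_iff by blast
        show "\<exists>M. \<forall>m\<ge>M. \<forall>n\<ge>M. norm (x m - x n) < e"
        proof (intro exI[of _ M] allI impI)
          fix m n assume "M \<le> m" "M \<le> n"
          then have "norm (y m - y n) < c * e" using M by blast
          moreover have "y m - y n = F (x m - x n)"
            using xy linear_diff[OF bounded_linear.linear[OF blF]] by simp
          ultimately have "c * norm (x m - x n) < c * e" using below[of "x m - x n"] by simp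
          then show "norm (x m - x n) < e" using c by simp
        qed
      qed
      then obtain p where "x \<longlonglongrightarrow> p" using convergent_eq_Cauchy by blast
      then have "(\<lambda>n. F (x n)) \<longlonglongrightarrow> F p" by (rule bounded_linear.tendsto[OF blF])
      moreover have "(\<lambda>n. F (x n)) = y" using xy by auto
      ultimately have "l = F p" using yl LIMSEQ_unique by auto
      then show "l \<in> range F" by simp
    qed
    show "0 \<in> range F" using F0 by (metis rangeI)
    show "\<forall>x\<in>range F. \<forall>y\<in>range F. x + y \<in> range F"
    proof (intro ballI)
      fix a b assume "a \<in> range F" "b \<in> range F"
      then obtain u v where "a = F u" "b = F v" by auto
      then have "a + b = F (u + v)" by (simp add: add)
      then show "a + b \<in> range F" by simp
    qed
    show "\<forall>r. \<forall>x\<in>range F. scaleR r x \<in> range F"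
    proof (intro allI ballI)
      fix r v assume "v \<in> range F"
      then obtain u where "v = F u" by auto
      then have "scaleR r v = F (scaleC (complex_of_real r) u)" by (simp add: hom scaleR_scaleC)
      then show "scaleR r v \<in> range F" by simp
    qed
    show "\<forall>w. (\<forall>v\<in>range F. inner v w = 0) \<longrightarrow> w = 0"
    proof (intro allI impI)
      fix w assume "\<forall>v\<in>range F. inner v w = 0"
      then have "inner (F w) w = 0" by simp
      then have "c * (norm w)^2 \<le> 0" using co[of w] by (simp add: Re_cinner)
      then show "w = 0" using c by (simp add: mult_le_0_iff)
    qed
  qed
  then have "w \<in> range F" by simp
  then show ?thesis by auto
qed


lemma clin_zero: "clinear_on U f \<Longrightarrow> 0 \<in> U" by (simp add: clinear_on_def csubspace_def)
lemma clin_add_mem: "clinear_on U f \<Longrightarrow> x \<in> U \<Longrightarrow> y \<in> U \<Longrightarrow> x + y \<in> U" by (simp add: clinear_on_def csubspace_def)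
lemma clin_scale_mem: "clinear_on U f \<Longrightarrow> x \<in> U \<Longrightarrow> scaleC c x \<in> U" by (simp add: clinear_on_def csubspace_def)
lemma clin_add: "clinear_on U f \<Longrightarrow> x \<in> U \<Longrightarrow> y \<in> U \<Longrightarrow> f (x + y) = f x + f y" by (simp add: clinear_on_def)
lemma clin_scale: "clinear_on U f \<Longrightarrow> x \<in> U \<Longrightarrow> f (scaleC c x) = scaleC c (f x)" by (simp add: clinear_on_def)
lemma clin_f0: "clinear_on U f \<Longrightarrow> f 0 = 0"
  using clin_scale[of U f 0 0] clin_zero[of U f] by simp
lemma clin_minus_mem: "clinear_on U f \<Longrightarrow> x \<in> U \<Longrightarrow> - x \<in> U"
  using clin_scale_mem[of U f x "-1"] by (simp add: scaleC_minus_left scaleC_one)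
lemma clin_diff_mem: "clinear_on U f \<Longrightarrow> x \<in> U \<Longrightarrow> y \<in> U \<Longrightarrow> x - y \<in> U"
  using clin_add_mem[of U f x "-y"] clin_minus_mem[of U f y] by simp
lemma clin_minus: "clinear_on U f \<Longrightarrow> x \<in> U \<Longrightarrow> f (- x) = - f x"
  using clin_scale[of U f x "-1"] by (simp add: scaleC_minus_left scaleC_one)
lemma clin_diff: "clinear_on U f \<Longrightarrow> x \<in> U \<Longrightarrow> y \<in> U \<Longrightarrow> f (x - y) = f x - f y"
  using clin_add[of U f x "-y"] clin_minus[of U f y] clin_minus_mem[of U f y] by simp

lemma sa_surj:
  fixes T0 :: "'a::{complex_inner,complete_space} \<Rightarrow> 'a"
  assumes sa: "selfadjoint_op D0 T0" and c: "c > 0"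
    and co: "\<forall>x\<in>D0. c * (norm x)^2 \<le> Re (cinner (T0 x) x)"
  shows "\<exists>x\<in>D0. T0 x = w"
proof -
  have lin: "clinear_on D0 T0" and dense: "closure D0 = UNIV"
    and sym: "\<forall>x\<in>D0. \<forall>y\<in>D0. cinner (T0 x) y = cinner x (T0 y)"
    and adj: "\<forall>y z. (\<forall>x\<in>D0. cinner (T0 x) y = cinner x z) \<longrightarrow> y \<in> D0"
    using sa unfolding selfadjoint_op_def by blast+
  have below: "c * norm x \<le> norm (T0 x)" if "x \<in> D0" for x
  proof -
    have "c * (norm x)^2 \<le> norm (T0 x) * norm x"
    proof -
      have "c * (norm x)^2 \<le> Re (cinner (T0 x) x)" using co that by blast
      then show ?thesis using cinner_cs[of "T0 x" x] complex_Re_le_cmod[of "cinner (T0 x) x"] by linarith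
    qed
    then have h: "c * norm x * norm x \<le> norm (T0 x) * norm x" by (simp add: power2_eq_square mult.assoc)
    show ?thesis
    proof (cases "norm x = 0")
      case True then show ?thesis by simp
    next
      case False then have "norm x > 0" by simp
      then show ?thesis using h mult_right_le_imp_le by blast
    qed
  qed
  have "T0 ` D0 = UNIV"
  proof (rule closed_subspace_full)
    show "closed (T0 ` D0)"
    unfolding closed_sequential_limits
    proof (intro allI impI, elim conjE)
      fix y l assume yR: "\<forall>n. y n \<in> T0 ` D0" and yl: "y \<longlonglongrightarrow> l"
      then have "\<forall>n. \<exists>u. u \<in> D0 \<and> y n = T0 u" by auto
      then obtain x where xy0: "\<forall>n. x n \<in> D0 \<and> y n = T0 (x n)" by (auto dest!: choice)
      then have xD: "\<And>n. x n \<in> D0" and xy: "\<And>n. y n = T0 (x n)" by auto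
      have "Cauchy y" using yl LIMSEQ_imp_Cauchy by blast
      have "Cauchy x"
        unfolding Cauchy_iff
      proof (intro allI impI)
        fix e :: real assume e: "0 < e"
        have ce: "c * e > 0" using e c by simp
        obtain M where M: "\<forall>m\<ge>M. \<forall>n\<ge>M. norm (y m - y n) < c * e"
          using \<open>Cauchy y\<close> ce unfolding Cauchy_iff by blast
        show "\<exists>M. \<forall>m\<ge>M. \<forall>n\<ge>M. norm (x m - x n) < e"
        proof (intro exI[of _ M] allI impI)
          fix m n assume "M \<le> m" "M \<le> n"
          then have "norm (y m - y n) < c * e" using M by blast
          moreover have "y m - y n = T0 (x m - x n)"
            using xy clin_diff[OF lin xD xD] by simp
          moreover have "c * norm (x m - x n) \<le> norm (T0 (x m - x n))"
            by (rule below) (rule clin_diff_mem[OF lin xD xD])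
          ultimately have "c * norm (x m - x n) < c * e" by simp
          then show "norm (x m - x n) < e" using c by simp
        qed
      qed
      then obtain p where xp: "x \<longlonglongrightarrow> p" using convergent_eq_Cauchy by blast
      have lim: "cinner (T0 v) p = cinner v l" if vD: "v \<in> D0" for v
      proof -
        have "(\<lambda>n. cinner (T0 v) (x n)) \<longlonglongrightarrow> cinner (T0 v) p"
          by (rule bounded_linear.tendsto[OF bl_cinner_right xp])
        moreover have "(\<lambda>n. cinner v (y n)) \<longlonglongrightarrow> cinner v l"
          by (rule bounded_linear.tendsto[OF bl_cinner_right yl])
        moreover have "(\<lambda>n. cinner (T0 v) (x n)) = (\<lambda>n. cinner v (y n))"
          using sym vD xD xy by auto
        ultimately show ?thesis using LIMSEQ_unique by metis
      qed
      then have pD: "p \<in> D0" using adj by blast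
      have "\<forall>v\<in>D0. cinner v (T0 p - l) = 0"
      proof
        fix v assume vD: "v \<in> D0"
        have "cinner v (T0 p) = cinner (T0 v) p" using sym vD pD by simp
        then show "cinner v (T0 p - l) = 0" using lim[OF vD] by (simp add: cinner_diff_right)
      qed
      then have "T0 p - l = 0" using cinner_orth_dense[OF dense] by blast
      then show "l \<in> T0 ` D0" using pD by force
    qed
    show "0 \<in> T0 ` D0" using clin_f0[OF lin] clin_zero[OF lin] by force
    show "\<forall>x\<in>T0 ` D0. \<forall>y\<in>T0 ` D0. x + y \<in> T0 ` D0"
    proof (intro ballI)
      fix a b assume "a \<in> T0 ` D0" "b \<in> T0 ` D0"
      then obtain u v where "u \<in> D0" "v \<in> D0" "a = T0 u" "b = T0 v" by auto
      then have "a + b = T0 (u + v)" "u + v \<in> D0" using clin_add[OF lin] clin_add_mem[OF lin] by auto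
      then show "a + b \<in> T0 ` D0" by simp
    qed
    show "\<forall>r. \<forall>x\<in>T0 ` D0. scaleR r x \<in> T0 ` D0"
    proof (intro allI ballI)
      fix r v assume "v \<in> T0 ` D0"
      then obtain u where u: "u \<in> D0" "v = T0 u" by auto
      then have "scaleR r v = T0 (scaleC (complex_of_real r) u)" using clin_scale[OF lin u(1)]
        by (simp add: scaleR_scaleC)
      then show "scaleR r v \<in> T0 ` D0" using clin_scale_mem[OF lin u(1)] by simp
    qed
    show "\<forall>w. (\<forall>v\<in>T0 ` D0. inner v w = 0) \<longrightarrow> w = 0"
    proof (intro allI impI)
      fix w assume o: "\<forall>v\<in>T0 ` D0. inner v w = 0"
      have "cinner (T0 x) w = cinner x 0" if xD: "x \<in> D0" for x
      proof -
        have "inner (T0 x) w = 0" using o xD by simp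
        moreover have "inner (scaleC \<i> (T0 x)) w = 0"
        proof -
          have "scaleC \<i> (T0 x) \<in> T0 ` D0"
            using clin_scale[OF lin xD, of \<i>] clin_scale_mem[OF lin xD, of \<i>] by (metis image_eqI)
          then show ?thesis using o by blast
        qed
        ultimately show ?thesis using cinner_zero_from_inner by simp
      qed
      then have wD: "w \<in> D0" using adj by blast
      have "inner (T0 w) w = 0" using o wD by simp
      moreover have "c * (norm w)^2 \<le> Re (cinner (T0 w) w)" using co wD by blast
      ultimately have "c * (norm w)^2 \<le> 0" by (simp add: Re_cinner)
      then show "w = 0" using c by (simp add: mult_le_0_iff)
    qed
  qed
  then have "w \<in> T0 ` D0" by simp
  then show ?thesis by auto
qed




lemma Q_identity:
  fixes z P :: complex and k X Y s :: real
  shows "Re (cnj (z + complex_of_real k) * (z^2 * complex_of_real X + z * P + complex_of_real Y + \<i> * complex_of_real s))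
    = (Re P - k * X + Re z * X) * (Im z)^2 + Im z * (s - k * Im P)
      + ((Re z)^2 * (Re z * X + k * X + Re P) + k * Re z * Re P + (Re z + k) * Y)"
  by (cases z; cases P) (simp add: power2_eq_square algebra_simps)

lemma amgm_abs:
  fixes t P Q :: real
  assumes h: "t^2 \<le> 4 * P * Q" and P: "P \<ge> 0" and Q: "Q \<ge> 0"
  shows "\<bar>t\<bar> \<le> P + Q"
proof -
  have e: "(P + Q)^2 = (P - Q)^2 + 4 * P * Q" by (simp add: power2_eq_square algebra_simps)
  have "0 \<le> (P - Q)^2" by (rule zero_le_power2)
  then have "t^2 \<le> (P + Q)^2" using h e by linarith
  then have "\<bar>t\<bar>^2 \<le> (P + Q)^2" by simp
  moreover have "0 \<le> P + Q" using P Q by simp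
  ultimately show ?thesis by (rule power2_le_imp_le)
qed

lemma amgm_le:
  fixes t P Q :: real
  assumes "t^2 \<le> 4 * P * Q" "P \<ge> 0" "Q \<ge> 0"
  shows "t \<le> P + Q"
  using amgm_abs[OF assms] by simp

lemma core:
  fixes a b k m X Y d1 t wb c :: real
  assumes k: "k > 0" and m: "0 \<le> m" "m \<le> 1" and X: "X \<ge> 0" and Y: "Y \<ge> 0" and d1: "d1 \<ge> 0"
    and wb: "Y + k * d1 + k^2 * X \<le> wb * Y" "wb \<ge> 1"
    and tb: "\<bar>t\<bar> \<le> (d1 - k * X + a * X) * b^2 + m * k * Y"
    and br: "(0 \<le> a \<and> c = a + k * (1 - m)) \<or> (a < 0 \<and> - a * wb < k * (1 - m) \<and> c = k * (1 - m) + a * wb)"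
  shows "c * Y \<le> (d1 - k * X + a * X) * b^2 + t + (a^2 * (a * X + k * X + d1) + k * a * d1 + (a + k) * Y)"
proof -
  define C0 where "C0 = a^2 * (a * X + k * X + d1) + k * a * d1 + (a + k) * Y"
  have Q: "(d1 - k * X + a * X) * b^2 + t + C0 \<ge> C0 - m * k * Y" using tb by linarith
  have "c * Y \<le> C0 - m * k * Y"
    using br
  proof
    assume h: "0 \<le> a \<and> c = a + k * (1 - m)"
    have "0 \<le> a^2 * (a * X + k * X + d1)" using h k X d1 by (intro mult_nonneg_nonneg) auto
    moreover have "0 \<le> k * a * d1" using h k d1 by simp
    ultimately have "C0 \<ge> (a + k) * Y" unfolding C0_def by linarith
    moreover have "c * Y = (a + k) * Y - m * k * Y"
    proof -
      have cd: "c = a + k * (1 - m)" using h by simp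
      show ?thesis unfolding cd by (simp add: algebra_simps)
    qed
    ultimately show ?thesis unfolding C0_def by linarith
  next
    assume h: "a < 0 \<and> - a * wb < k * (1 - m) \<and> c = k * (1 - m) + a * wb"
    have "(- a) * 1 \<le> (- a) * wb" using h wb(2) by (intro mult_left_mono) auto
    then have "- a \<le> - a * wb" by simp
    moreover have "k * (1 - m) \<le> k" using k m by (simp add: mult_left_le)
    ultimately have ak: "a + k > 0" using h by linarith
    have "a * (wb * Y) \<le> a * (Y + k * d1 + k^2 * X)"
      using wb(1) h by (intro mult_left_mono_neg) auto
    then have e1: "a * wb * Y \<le> a * (Y + k * d1 + k^2 * X)" by (simp add: mult.assoc)
    have e2: "C0 - k * Y - a * (Y + k * d1 + k^2 * X) = a^2 * d1 + a * X * (a * (a + k) - k^2)"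
      unfolding C0_def by (simp add: power2_eq_square algebra_simps)
    have "a * (a + k) < 0" using h ak by (simp add: mult_neg_pos)
    moreover have "0 < k^2" using k by simp
    ultimately have neg: "a * (a + k) - k^2 < 0" by linarith
    have "a * X \<le> 0" using h X by (simp add: mult_nonpos_nonneg)
    then have "0 \<le> a * X * (a * (a + k) - k^2)" using neg by (intro mult_nonpos_nonpos) auto
    moreover have "0 \<le> a^2 * d1" using d1 by simp
    ultimately have "C0 \<ge> k * Y + a * wb * Y" using e1 e2 by linarith
    moreover have "c * Y = k * Y + a * wb * Y - m * k * Y"
    proof -
      have cd: "c = k * (1 - m) + a * wb" using h by simp
      show ?thesis unfolding cd by (simp add: algebra_simps)
    qed
    ultimately show ?thesis by linarith
  qed
  then show ?thesis using Q unfolding C0_def by linarith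
qed

lemma tbound1:
  fixes a b k m X Y d1 d2 s BB wa :: real
  assumes k: "k > 0" and m: "m > 0" and X: "X \<ge> 0" and Y: "Y \<ge> 0"
    and cs: "(s / k - d2)^2 \<le> BB * Y"
    and om: "wa * X \<le> d1 / k - X - BB / (4 * m)"
    and a: "a \<ge> - k * wa" and BB: "BB \<ge> 0"
  shows "\<bar>b * (s - k * d2)\<bar> \<le> (d1 - k * X + a * X) * b^2 + m * k * Y"
proof -
  define G where "G = d1 - k * X - k * wa * X"
  have kB: "k * BB \<le> 4 * m * G"
  proof -
    have "k * (wa * X) \<le> k * (d1 / k - X - BB / (4 * m))" using om k by (intro mult_left_mono) auto
    then have "k * wa * X \<le> d1 - k * X - k * BB / (4 * m)" using k by (simp add: algebra_simps)
    then have "k * BB / (4 * m) \<le> G" unfolding G_def by linarith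
    then show ?thesis using m by (simp add: field_simps)
  qed
  have "0 \<le> k * BB" using k BB by simp
  then have h4: "0 \<le> (4 * m) * G" using kB by linarith
  have G0: "G \<ge> 0"
  proof (rule ccontr)
    assume "\<not> G \<ge> 0"
    then have "(4 * m) * G < 0" using m by (intro mult_pos_neg) auto
    then show False using h4 by linarith
  qed
  have FG: "d1 - k * X + a * X \<ge> G"
  proof -
    have "(- k * wa) * X \<le> a * X" using a X by (rule mult_right_mono)
    then show ?thesis unfolding G_def by simp
  qed
  have "(b * (s - k * d2))^2 = b^2 * k^2 * (s / k - d2)^2"
    using k by (simp add: power2_eq_square field_simps)
  also have "\<dots> \<le> b^2 * k^2 * (BB * Y)" using cs by (intro mult_left_mono) auto
  also have "\<dots> = b^2 * k * Y * (k * BB)" by (simp add: power2_eq_square algebra_simps)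
  also have "\<dots> \<le> b^2 * k * Y * (4 * m * G)" using kB k Y by (intro mult_left_mono) auto
  also have "\<dots> \<le> b^2 * k * Y * (4 * m * (d1 - k * X + a * X))"
    using FG k Y m by (intro mult_left_mono) auto
  also have "\<dots> = 4 * ((d1 - k * X + a * X) * b^2) * (m * k * Y)" by (simp add: algebra_simps)
  finally show ?thesis
    using G0 FG k m Y by (intro amgm_abs) auto
qed

lemma tbound2:
  fixes a b k p q X Y d1 d2 s NS ND del a0 :: real
  assumes k: "k > 0" and p: "p > 0" and q: "q > 0" and X: "X \<ge> 0" and Y: "Y \<ge> 0" and a0: "a0 > 0"
    and sb: "\<bar>s\<bar> \<le> NS * Y" and db: "\<bar>d2\<bar> \<le> ND * Y"
    and d1: "del * Y \<le> d1" and YX: "a0 * X \<le> Y"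
    and W: "a0 * (del / k - NS^2 / (4 * p * k^2) - ND^2 / (4 * q)) \<ge> 1"
    and a: "a \<ge> - k * (a0 * (del / k - NS^2 / (4 * p * k^2) - ND^2 / (4 * q)) - 1)"
  shows "\<bar>b * s - k * b * d2\<bar> \<le> (d1 - k * X + a * X) * b^2 + (p + q) * k * Y"
proof -
  define W where "W = del / k - NS^2 / (4 * p * k^2) - ND^2 / (4 * q)"
  have W0: "W \<ge> 0" using W a0 unfolding W_def by (smt (verit) mult_nonpos_nonneg mult_pos_neg)
  have t1: "\<bar>b * s\<bar> \<le> p * k * Y + NS^2 * b^2 * Y / (4 * p * k)"
  proof -
    have "\<bar>b * s\<bar> \<le> \<bar>b\<bar> * (NS * Y)" using sb by (simp add: abs_mult mult_left_mono)
    also have "\<dots> \<le> p * k * Y + NS^2 * b^2 * Y / (4 * p * k)"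
    proof (rule amgm_le)
      show "(\<bar>b\<bar> * (NS * Y))^2 \<le> 4 * (p * k * Y) * (NS^2 * b^2 * Y / (4 * p * k))"
        using p k by (simp add: power2_eq_square field_simps)
    qed (use p k Y in auto)
    finally show ?thesis by simp
  qed
  have t2: "\<bar>k * b * d2\<bar> \<le> q * k * Y + k * ND^2 * b^2 * Y / (4 * q)"
  proof -
    have "\<bar>k * b * d2\<bar> \<le> k * \<bar>b\<bar> * (ND * Y)" using db k by (simp add: abs_mult mult_left_mono)
    also have "\<dots> \<le> q * k * Y + k * ND^2 * b^2 * Y / (4 * q)"
    proof (rule amgm_le)
      show "(k * \<bar>b\<bar> * (ND * Y))^2 \<le> 4 * (q * k * Y) * (k * ND^2 * b^2 * Y / (4 * q))"
        using q k by (simp add: power2_eq_square field_simps)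
    qed (use q k Y in auto)
    finally show ?thesis by simp
  qed
  have e: "NS^2 * b^2 * Y / (4 * p * k) + k * ND^2 * b^2 * Y / (4 * q) = b^2 * (del * Y - k * W * Y)"
    unfolding W_def using p q k by (simp add: power2_eq_square field_simps)
  have F: "d1 - k * X + a * X \<ge> del * Y - k * W * Y"
  proof -
    have "k * W * (a0 * X) \<le> k * W * Y" using YX k W0 by (intro mult_left_mono) auto
    moreover have "(k - a) * X \<le> k * W * a0 * X"
    proof -
      have "k - a \<le> k * (a0 * W)" using a unfolding W_def by (simp add: algebra_simps)
      then have "(k - a) * X \<le> (k * (a0 * W)) * X" using X by (rule mult_right_mono)
      then show ?thesis by (simp add: algebra_simps)
    qed
    ultimately show ?thesis using d1 by (simp add: algebra_simps)
  qed
  have "\<bar>b * s - k * b * d2\<bar> \<le> \<bar>b * s\<bar> + \<bar>k * b * d2\<bar>" by (rule abs_triangle_ineq4)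
  also have "\<dots> \<le> (p + q) * k * Y + b^2 * (del * Y - k * W * Y)" using t1 t2 e by (simp add: algebra_simps)
  also have "\<dots> \<le> (p + q) * k * Y + b^2 * (d1 - k * X + a * X)" using F by (simp add: mult_left_mono)
  finally show ?thesis by (simp add: algebra_simps)
qed




locale setting =
  fixes DT DR :: "'h::{complex_inner,complete_space} set" and T R S Dr :: "'h \<Rightarrow> 'h" and a0 :: real
  assumes a0_pos: "a0 > 0" and T_sa: "selfadjoint_op DT T"
    and T_ge: "\<forall>x\<in>DT. a0 * (norm x)^2 \<le> Re (cinner (T x) x)"
    and R_sqrt: "is_op_sqrt DT T DR R" and S_sa: "bounded_selfadjoint S"
    and D_bdd: "bounded_1_m1 DR R Dr"
begin

lemma R_lin: "clinear_on DR R" and R_sym: "x \<in> DR \<Longrightarrow> y \<in> DR \<Longrightarrow> cinner (R x) y = cinner x (R y)"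
  and R_nonneg: "x \<in> DR \<Longrightarrow> 0 \<le> Re (cinner (R x) x)"
  and DT_eq: "DT = {x \<in> DR. R x \<in> DR}" and T_eq: "x \<in> DT \<Longrightarrow> T x = R (R x)"
  using R_sqrt unfolding is_op_sqrt_def selfadjoint_op_def nonneg_op_def by blast+

lemma R_inj: assumes "x \<in> DR" "y \<in> DR" "R x = R y" shows "x = y"
proof -
  let ?u = "x - y"
  have uD: "?u \<in> DR" using clin_diff_mem[OF R_lin assms(1,2)] .
  have Ru: "R ?u = 0" using clin_diff[OF R_lin assms(1,2)] assms(3) by simp
  then have "?u \<in> DT" using uD clin_zero[OF R_lin] DT_eq by simp
  moreover have "T ?u = 0" using T_eq[OF calculation] Ru clin_f0[OF R_lin] by simp
  ultimately have "a0 * (norm ?u)^2 \<le> 0" using T_ge by fastforce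
  then show ?thesis using a0_pos by (simp add: mult_le_0_iff)
qed

lemma T_surj: "\<exists>u\<in>DT. T u = w"
  using sa_surj[OF T_sa a0_pos T_ge] .

lemma R_surj: "\<exists>x\<in>DR. R x = w"
proof -
  obtain u where "u \<in> DT" "T u = w" using T_surj by blast
  then show ?thesis using DT_eq T_eq by auto
qed

lemma R_ex1: "\<exists>!x. x \<in> DR \<and> R x = w"
  using R_surj R_inj by blast

lemma rinv_mem: "rinv DR R w \<in> DR" and R_rinv: "R (rinv DR R w) = w"
  using theI'[OF R_ex1[of w]] unfolding rinv_def by blast+

lemma rinv_R: "x \<in> DR \<Longrightarrow> rinv DR R (R x) = x"
  using R_inj rinv_mem R_rinv by blast

lemma R_lower: assumes xD: "x \<in> DR" shows "a0 * (norm x)^2 \<le> (norm (R x))^2"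
proof -
  obtain u where uD: "u \<in> DT" and Tu: "T u = R x" using T_surj by blast
  have RuD: "R u \<in> DR" and uR: "u \<in> DR" using uD DT_eq by auto
  have "R (R u) = R x" using T_eq[OF uD] Tu by simp
  then have xu: "x = R u" using R_inj[OF xD RuD] by simp
  have "(norm x)^2 = Re (cinner (R u) (R u))" using xu by (simp add: Re_cinner_self)
  also have "cinner (R u) (R u) = cinner (R (R u)) u" using R_sym[OF RuD uR] by simp
  also have "\<dots> = cinner (T u) u" using T_eq[OF uD] by simp
  finally have nx: "(norm x)^2 = Re (cinner (T u) u)" .
  have "Re (cinner (T u) u) \<le> norm (T u) * norm u"
    using cinner_cs[of "T u" u] complex_Re_le_cmod[of "cinner (T u) u"] by linarith
  then have h1: "(norm x)^2 \<le> norm (R x) * norm u" using nx Tu by simp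
  have h2: "a0 * (norm u)^2 \<le> (norm x)^2" using T_ge uD nx by simp
  have h3: "a0 * norm u \<le> norm (R x)"
  proof (cases "norm u = 0")
    case True then show ?thesis by simp
  next
    case False
    then have "0 < norm u" by simp
    moreover have "(a0 * norm u) * norm u \<le> norm (R x) * norm u"
      using h1 h2 by (simp add: power2_eq_square mult.assoc)
    ultimately show ?thesis using mult_right_le_imp_le by blast
  qed
  have "a0 * (norm x)^2 \<le> a0 * (norm (R x) * norm u)" using h1 a0_pos by simp
  also have "\<dots> = norm (R x) * (a0 * norm u)" by simp
  also have "\<dots> \<le> norm (R x) * norm (R x)" using h3 by (simp add: mult_left_mono)
  finally show ?thesis by (simp add: power2_eq_square)
qed

lemma rinv_add: "rinv DR R (x + y) = rinv DR R x + rinv DR R y"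
proof -
  have "R (rinv DR R x + rinv DR R y) = x + y"
    using clin_add[OF R_lin rinv_mem rinv_mem] R_rinv by simp
  then show ?thesis using rinv_R[OF clin_add_mem[OF R_lin rinv_mem rinv_mem]] by metis
qed

lemma rinv_scale: "rinv DR R (scaleC c x) = scaleC c (rinv DR R x)"
proof -
  have "R (scaleC c (rinv DR R x)) = scaleC c x"
    using clin_scale[OF R_lin rinv_mem] R_rinv by simp
  then show ?thesis using rinv_R[OF clin_scale_mem[OF R_lin rinv_mem]] by metis
qed

lemma rinv_bound: "norm (rinv DR R y) \<le> (1 / sqrt a0) * norm y"
proof -
  have "a0 * (norm (rinv DR R y))^2 \<le> (norm y)^2" using R_lower[OF rinv_mem] R_rinv by simp
  then have "(sqrt a0 * norm (rinv DR R y))^2 \<le> (norm y)^2" using a0_pos by (simp add: power_mult_distrib)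
  then have "sqrt a0 * norm (rinv DR R y) \<le> norm y" by (rule power2_le_imp_le) simp
  then show ?thesis using a0_pos by (simp add: field_simps)
qed


lemma D_lin: "clinear_on DR Dr" using D_bdd unfolding bounded_1_m1_def by blast

lemma D_bound: "\<exists>C\<ge>0. \<forall>x\<in>DR. norm (Dr x) \<le> C * norm (R x)"
proof -
  obtain C where C: "\<forall>x\<in>DR. norm (Dr x) \<le> C * norm (R x)" using D_bdd unfolding bounded_1_m1_def by blast
  have "\<forall>x\<in>DR. norm (Dr x) \<le> max C 0 * norm (R x)"
    using C by (meson max.cobounded1 mult_right_mono norm_ge_zero order_trans)
  then show ?thesis by (intro exI[of _ "max C 0"]) auto
qed

definition CD where "CD = (SOME C. C \<ge> 0 \<and> (\<forall>x\<in>DR. norm (Dr x) \<le> C * norm (R x)))"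

lemma CD: "CD \<ge> 0" "x \<in> DR \<Longrightarrow> norm (Dr x) \<le> CD * norm (R x)"
  using someI_ex[OF D_bound[unfolded Bex_def[symmetric]]] unfolding CD_def by blast+

abbreviation "Dp \<equiv> Dprime DR R Dr"

lemma Dp_add: "Dp (x + y) = Dp x + Dp y"
  by (simp add: Dprime_def rinv_add clin_add[OF D_lin rinv_mem rinv_mem])
lemma Dp_scale: "Dp (scaleC c x) = scaleC c (Dp x)"
  by (simp add: Dprime_def rinv_scale clin_scale[OF D_lin rinv_mem])
lemma Dp_bound: "norm (Dp x) \<le> CD * norm x"
  using CD(2)[OF rinv_mem, of x] by (simp add: Dprime_def R_rinv)

lemma Dp_adj: "cinner (Dp u) y = cinner u (cadj Dp y)"
  by (rule cadj_prop[OF Dp_add Dp_scale Dp_bound])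

lemma Dp_adj_bound: "norm (cadj Dp y) \<le> CD * norm y"
  by (rule cadj_bound[OF Dp_add Dp_scale Dp_bound CD(1)])

lemma Dp_R: "x \<in> DR \<Longrightarrow> Dp (R x) = Dr x"
  by (simp add: Dprime_def rinv_R)

lemma D1_pair: assumes "x \<in> DR"
  shows "cinner (D1rep DR R Dr x) (R x) = complex_of_real (Re (cinner (Dr x) (R x)))"
proof -
  let ?P = "cinner (Dr x) (R x)"
  have a: "cinner (cadj Dp (R x)) (R x) = cnj ?P"
    using Dp_adj[of "R x" "R x"] cinner_commute[of "cadj Dp (R x)" "R x"] Dp_R[OF assms] by simp
  have "cinner (D1rep DR R Dr x) (R x) = (1/2) * (?P + cnj ?P)"
    unfolding D1rep_def using a Dp_R[OF assms] by (simp add: cinner_scaleC_left cinner_add_left)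
  also have "\<dots> = complex_of_real (Re ?P)" by (simp add: complex_add_cnj)
  finally show ?thesis .
qed

lemma D2_pair: assumes "x \<in> DR"
  shows "cinner (D2rep DR R Dr x) (R x) = complex_of_real (Im (cinner (Dr x) (R x)))"
proof -
  let ?P = "cinner (Dr x) (R x)"
  have a: "cinner (cadj Dp (R x)) (R x) = cnj ?P"
    using Dp_adj[of "R x" "R x"] cinner_commute[of "cadj Dp (R x)" "R x"] Dp_R[OF assms] by simp
  have "cinner (D2rep DR R Dr x) (R x) = (1 / (2 * \<i>)) * (?P - cnj ?P)"
    unfolding D2rep_def using a Dp_R[OF assms] by (simp add: cinner_scaleC_left cinner_diff_left)
  also have "\<dots> = complex_of_real (Im ?P)" by (simp add: complex_diff_cnj field_simps)
  finally show ?thesis .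
qed

lemma D2_bound: assumes "x \<in> DR" shows "norm (D2rep DR R Dr x) \<le> CD * norm (R x)"
proof -
  have "norm (D2rep DR R Dr x) = (1/2) * norm (Dp (R x) - cadj Dp (R x))"
    unfolding D2rep_def by (simp add: norm_scaleC norm_divide norm_mult)
  also have "\<dots> \<le> (1/2) * (norm (Dp (R x)) + norm (cadj Dp (R x)))"
    by (simp add: norm_triangle_ineq4)
  also have "\<dots> \<le> (1/2) * (CD * norm (R x) + CD * norm (R x))"
    using Dp_bound Dp_adj_bound by (intro mult_left_mono add_mono) auto
  finally show ?thesis by (simp add: algebra_simps)
qed

lemma S_lin: "\<And>x y. S (x + y) = S x + S y" and S_hom: "\<And>c x. S (scaleC c x) = scaleC c (S x)"
  and S_sym: "\<And>x y. cinner (S x) y = cinner x (S y)"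
  using S_sa unfolding bounded_selfadjoint_def bounded_clinear_op_def clinear_on_def by auto

lemma S_bound: "\<exists>K\<ge>0. \<forall>x. norm (S x) \<le> K * norm x"
proof -
  obtain K where K: "\<forall>x. norm (S x) \<le> K * norm x"
    using S_sa unfolding bounded_selfadjoint_def bounded_clinear_op_def by blast
  have "\<forall>x. norm (S x) \<le> max K 0 * norm x"
    using K by (meson max.cobounded1 mult_right_mono norm_ge_zero order_trans)
  then show ?thesis by (intro exI[of _ "max K 0"]) auto
qed

lemma S_real: "cinner (S y) y = complex_of_real (Re (cinner (S y) y))"
proof -
  have "cinner (S y) y = cnj (cinner (S y) y)"
    using S_sym[of y y] cinner_commute[of "S y" y] by simp
  then have "Im (cinner (S y) y) = 0" by (metis cnj.simps(2) neg_equal_zero)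
  then show ?thesis by (simp add: complex_eq_iff)
qed

lemma pencil_pair: assumes xD: "x \<in> DR"
  shows "cinner (pencil_rep DR R S Dr z x) (R x) = z^2 * complex_of_real ((norm x)^2)
     + z * cinner (Dr x) (R x) + complex_of_real ((norm (R x))^2)
     + \<i> * complex_of_real (Re (cinner (S (R x)) (R x)))"
proof -
  have "cinner (rinv DR R x) (R x) = cinner (R (rinv DR R x)) x"
    using R_sym[OF rinv_mem xD] by simp
  then have a: "cinner (rinv DR R x) (R x) = complex_of_real ((norm x)^2)"
    by (simp add: R_rinv cinner_self)
  have "cinner (pencil_rep DR R S Dr z x) (R x) = z^2 * cinner (rinv DR R x) (R x)
     + z * cinner (Dr x) (R x) + cinner (R x) (R x) + \<i> * cinner (S (R x)) (R x)"
    unfolding pencil_rep_def cinner_add_left cinner_scaleC_left by (simp only: add.assoc)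
  also have "\<dots> = z^2 * complex_of_real ((norm x)^2)
     + z * cinner (Dr x) (R x) + complex_of_real ((norm (R x))^2)
     + \<i> * complex_of_real (Re (cinner (S (R x)) (R x)))"
    using a S_real[of "R x"] cinner_self[of "R x"] by (simp only:)
  finally show ?thesis .
qed

end



context setting begin

definition KS where "KS = (SOME K. K \<ge> 0 \<and> (\<forall>x. norm (S x) \<le> K * norm x))"
lemma KS: "KS \<ge> 0" "norm (S x) \<le> KS * norm x"
  using someI_ex[OF S_bound] unfolding KS_def by blast+

lemma resolvent_from_coercive:
  assumes c: "c > 0"
    and co: "\<forall>x\<in>DR. c * (norm (R x))^2 \<le> Re (\<zeta> * cinner (pencil_rep DR R S Dr z x) (R x))"
  shows "z \<in> pencil_resolvent DR R S Dr"
proof -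
  define G where "G y = pencil_rep DR R S Dr z (rinv DR R y)" for y
  have Geq: "G y = scaleC (z^2) (rinv DR R (rinv DR R y)) + scaleC z (Dp y) + (y + scaleC \<i> (S y))" for y
    unfolding G_def pencil_rep_def by (simp add: R_rinv Dprime_def)
  have Gadd: "G (x + y) = G x + G y" for x y
    unfolding Geq by (simp add: rinv_add Dp_add S_lin scaleC_add_right algebra_simps)
  have Ghom: "G (scaleC a x) = scaleC a (G x)" for a x
    unfolding Geq by (simp add: rinv_scale Dp_scale S_hom scaleC_add_right scaleC_scaleC mult.commute)
  define KG where "KG = cmod z ^ 2 * ((1 / sqrt a0) * (1 / sqrt a0)) + cmod z * CD + 1 + KS"
  have Gbd: "norm (G y) \<le> KG * norm y" for y
  proof -
    have r2: "norm (rinv DR R (rinv DR R y)) \<le> (1 / sqrt a0) * (1 / sqrt a0) * norm y"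
    proof -
      have "norm (rinv DR R (rinv DR R y)) \<le> (1 / sqrt a0) * norm (rinv DR R y)" by (rule rinv_bound)
      also have "\<dots> \<le> (1 / sqrt a0) * ((1 / sqrt a0) * norm y)"
        using rinv_bound a0_pos by (intro mult_left_mono) auto
      finally show ?thesis by simp
    qed
    have "norm (G y) \<le> norm (scaleC (z^2) (rinv DR R (rinv DR R y))) + norm (scaleC z (Dp y)) + (norm y + norm (scaleC \<i> (S y)))"
      unfolding Geq by (meson add_mono norm_triangle_ineq order_trans)
    also have "\<dots> = cmod z ^ 2 * norm (rinv DR R (rinv DR R y)) + cmod z * norm (Dp y) + (norm y + norm (S y))"
      by (simp add: norm_scaleC norm_power)
    also have "\<dots> \<le> cmod z ^ 2 * ((1 / sqrt a0) * (1 / sqrt a0) * norm y) + cmod z * (CD * norm y) + (norm y + KS * norm y)"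
      using r2 Dp_bound KS(2) by (intro add_mono mult_left_mono) auto
    also have "\<dots> = KG * norm y" by (simp add: KG_def algebra_simps)
    finally show ?thesis .
  qed
  have Gco: "c * (norm y)^2 \<le> Re (\<zeta> * cinner (G y) y)" for y :: 'h
  proof -
    have "c * (norm (R (rinv DR R y)))^2 \<le> Re (\<zeta> * cinner (pencil_rep DR R S Dr z (rinv DR R y)) (R (rinv DR R y)))"
      using co rinv_mem by blast
    then show ?thesis unfolding G_def R_rinv .
  qed
  have G0: "G 0 = 0" using Ghom[of 0 0] by simp
  have Ginj: "x = y" if "G x = G y" for x y
  proof -
    have "G (x - y) = 0" using Gadd[of "x - y" y] that by simp
    then have "c * (norm (x - y))^2 \<le> 0" using Gco[of "x - y"] by simp
    then show ?thesis using c by (simp add: mult_le_0_iff)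
  qed
  have Gsurj: "\<exists>y. G y = w" for w :: 'h
  proof (cases "\<zeta> = 0")
    case True
    have "y = 0" for y :: 'h using Gco[of y] True c by (simp add: mult_le_0_iff)
    then show ?thesis using G0 by metis
  next
    case False
    define F where "F y = scaleC \<zeta> (G y)" for y
    have "\<exists>y. F y = scaleC \<zeta> w"
    proof (rule coercive_surj[where K="cmod \<zeta> * KG" and c=c])
      show "F (x + y) = F x + F y" for x y by (simp add: F_def Gadd scaleC_add_right)
      show "F (scaleC a x) = scaleC a (F x)" for a x by (simp add: F_def Ghom scaleC_scaleC mult.commute)
      show "norm (F x) \<le> cmod \<zeta> * KG * norm x" for x
        using Gbd[of x] by (simp add: F_def norm_scaleC mult.assoc mult_left_mono)
      show "c > 0" by (rule c)
      show "c * (norm x)^2 \<le> Re (cinner (F x) x)" for x using Gco[of x] by (simp add: F_def cinner_scaleC_left)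
    qed
    then obtain y where "scaleC \<zeta> (G y) = scaleC \<zeta> w" unfolding F_def by blast
    then have "scaleC (1/\<zeta>) (scaleC \<zeta> (G y)) = scaleC (1/\<zeta>) (scaleC \<zeta> w)" by simp
    then have "G y = w" using False by (simp add: scaleC_scaleC scaleC_one)
    then show ?thesis by blast
  qed
  define Gi where "Gi w = (SOME y. G y = w)" for w
  have G_Gi: "G (Gi w) = w" for w unfolding Gi_def using someI_ex[OF Gsurj] .
  have Gi_G: "Gi (G y) = y" for y using G_Gi Ginj by blast
  define M where "M w = rinv DR R (Gi w)" for w
  show ?thesis
    unfolding pencil_resolvent_def
  proof (intro CollectI exI[of _ M] conjI allI ballI)
    show "M w \<in> DR" for w by (simp add: M_def rinv_mem)
    show "clinear_on UNIV M"
      unfolding clinear_on_def csubspace_def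
    proof (intro conjI ballI allI UNIV_I)
      fix x y :: 'h
      have "Gi (x + y) = Gi x + Gi y" using Gi_G[of "Gi x + Gi y"] by (simp add: Gadd G_Gi)
      then show "M (x + y) = M x + M y" by (simp add: M_def rinv_add)
    next
      fix a and x :: 'h
      have "Gi (scaleC a x) = scaleC a (Gi x)" using Gi_G[of "scaleC a (Gi x)"] by (simp add: Ghom G_Gi)
      then show "M (scaleC a x) = scaleC a (M x)" by (simp add: M_def rinv_scale)
    qed
    show "\<exists>C. \<forall>w. norm (R (M w)) \<le> C * norm w"
    proof (intro exI allI)
      fix w
      have RM: "R (M w) = Gi w" by (simp add: M_def R_rinv)
      let ?y = "Gi w"
      have "c * (norm ?y)^2 \<le> Re (\<zeta> * cinner w ?y)" using Gco[of ?y] G_Gi by simp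
      also have "\<dots> \<le> cmod (\<zeta> * cinner w ?y)" by (rule complex_Re_le_cmod)
      also have "\<dots> \<le> cmod \<zeta> * (norm w * norm ?y)" by (simp add: norm_mult cinner_cs mult_left_mono)
      finally have h: "(c * norm ?y) * norm ?y \<le> (cmod \<zeta> * norm w) * norm ?y"
        by (simp add: power2_eq_square ac_simps)
      have "c * norm ?y \<le> cmod \<zeta> * norm w"
      proof (cases "norm ?y = 0")
        case True then show ?thesis by simp
      next
        case False then have "norm ?y > 0" by simp
        then show ?thesis using h mult_right_le_imp_le by blast
      qed
      then show "norm (R (M w)) \<le> cmod \<zeta> / c * norm w" using c RM by (simp add: field_simps)
    qed
    show "pencil_rep DR R S Dr z (M w) = w" for w using G_Gi[of w] by (simp add: G_def M_def)
    show "M (pencil_rep DR R S Dr z x) = x" if "x \<in> DR" for x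
    proof -
      have "pencil_rep DR R S Dr z x = G (R x)" using that by (simp add: G_def rinv_R)
      then show ?thesis using that by (simp add: M_def Gi_G rinv_R)
    qed
  qed
qed

end



context setting begin

lemma Y_pos: "x \<in> DR \<Longrightarrow> x \<noteq> 0 \<Longrightarrow> (norm (R x))^2 > 0"
  using R_lower[of x] a0_pos by (smt (verit) mult_pos_pos zero_less_norm_iff zero_less_power)

lemma ReP_le: "x \<in> DR \<Longrightarrow> Re (cinner (Dr x) (R x)) \<le> CD * (norm (R x))^2"
proof -
  assume xD: "x \<in> DR"
  have "Re (cinner (Dr x) (R x)) \<le> norm (Dr x) * norm (R x)"
    using cinner_cs[of "Dr x" "R x"] complex_Re_le_cmod[of "cinner (Dr x) (R x)"] by linarith
  also have "\<dots> \<le> CD * norm (R x) * norm (R x)" using CD(2)[OF xD] by (intro mult_right_mono) auto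
  finally show ?thesis by (simp add: power2_eq_square mult.assoc)
qed

lemma omega2_bound:
  assumes k: "k > 0" and xD: "x \<in> DR" and x0: "x \<noteq> 0"
  shows "(norm (R x))^2 + k * Re (cinner (Dr x) (R x)) + k^2 * (norm x)^2 \<le> omega2 DR R Dr k * (norm (R x))^2"
proof -
  define f where "f x = ((norm (R x))^2 + k * Re (cinner (D1rep DR R Dr x) (R x)) + k^2 * (norm x)^2) / (norm (R x))^2" for x
  have fe: "f y = ((norm (R y))^2 + k * Re (cinner (Dr y) (R y)) + k^2 * (norm y)^2) / (norm (R y))^2" if "y \<in> DR" for y
    unfolding f_def using D1_pair[OF that] by simp
  have bd: "f y \<le> 1 + k * CD + k^2 / a0" if yD: "y \<in> DR" and y0: "y \<noteq> 0" for y
  proof -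
    have Yp: "(norm (R y))^2 > 0" using Y_pos yD y0 by blast
    have "k * Re (cinner (Dr y) (R y)) \<le> k * (CD * (norm (R y))^2)" using ReP_le[OF yD] k by simp
    moreover have "k^2 * (norm y)^2 \<le> k^2 * ((norm (R y))^2 / a0)"
      using R_lower[OF yD] a0_pos by (intro mult_left_mono) (auto simp: field_simps)
    ultimately have "(norm (R y))^2 + k * Re (cinner (Dr y) (R y)) + k^2 * (norm y)^2
       \<le> (1 + k * CD + k^2 / a0) * (norm (R y))^2" by (simp add: algebra_simps)
    then show ?thesis using Yp fe[OF yD] by (simp add: divide_le_eq)
  qed
  have "f x \<in> {f y | y. y \<in> DR \<and> y \<noteq> 0}" using xD x0 by auto
  moreover have "bdd_above {f y | y. y \<in> DR \<and> y \<noteq> 0}"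
    using bd by (intro bdd_aboveI[of _ "1 + k * CD + k^2 / a0"]) auto
  ultimately have "f x \<le> omega2 DR R Dr k" unfolding omega2_def f_def by (rule cSup_upper)
  then show ?thesis using Y_pos[OF xD x0] fe[OF xD] by (simp add: divide_le_eq)
qed

lemma cs_B:
  assumes xD: "x \<in> DR" and k: "k > 0"
  shows "(Re (cinner (S (R x)) (R x)) / k - Im (cinner (Dr x) (R x)))^2
    \<le> (norm (scaleC (complex_of_real (1/k)) (S (R x)) - D2rep DR R Dr x))^2 * (norm (R x))^2"
proof -
  let ?B = "scaleC (complex_of_real (1/k)) (S (R x)) - D2rep DR R Dr x"
  have eq: "cinner ?B (R x) = complex_of_real (Re (cinner (S (R x)) (R x)) / k - Im (cinner (Dr x) (R x)))"
    using S_real[of "R x"] D2_pair[OF xD]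
    by (simp add: cinner_diff_left cinner_scaleC_left)
  have "\<bar>Re (cinner (S (R x)) (R x)) / k - Im (cinner (Dr x) (R x))\<bar> \<le> norm ?B * norm (R x)"
    using cinner_cs[of ?B "R x"] unfolding eq norm_of_real .
  then have "\<bar>Re (cinner (S (R x)) (R x)) / k - Im (cinner (Dr x) (R x))\<bar>^2 \<le> (norm ?B * norm (R x))^2"
    by (intro power_mono) auto
  then show ?thesis by (simp add: power_mult_distrib)
qed

lemma coercive_pair:
  assumes xD: "x \<in> DR"
  shows "Re (cnj (z + complex_of_real k) * cinner (pencil_rep DR R S Dr z x) (R x))
    = (Re (cinner (Dr x) (R x)) - k * (norm x)^2 + Re z * (norm x)^2) * (Im z)^2
      + Im z * (Re (cinner (S (R x)) (R x)) - k * Im (cinner (Dr x) (R x)))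
      + ((Re z)^2 * (Re z * (norm x)^2 + k * (norm x)^2 + Re (cinner (Dr x) (R x)))
         + k * Re z * Re (cinner (Dr x) (R x)) + (Re z + k) * (norm (R x))^2)"
  unfolding pencil_pair[OF xD] by (rule Q_identity)


lemma trivial_resolvent:
  assumes "\<forall>x\<in>DR. x = 0"
  shows "z \<in> pencil_resolvent DR R S Dr"
proof (rule resolvent_from_coercive[where c=1 and \<zeta>=1])
  show "(1::real) > 0" by simp
  show "\<forall>x\<in>DR. 1 * (norm (R x))^2 \<le> Re (1 * cinner (pencil_rep DR R S Dr z x) (R x))"
    using assms clin_f0[OF R_lin] by auto
qed

lemma choose_c:
  fixes a k m w2 th :: real
  assumes k: "k > 0" and m: "m \<le> 1" and w2: "w2 \<ge> 1" and th: "th \<le> (1 - m) / w2"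
    and a: "a > - k * th"
  shows "\<exists>c>0. (0 \<le> a \<and> c = a + k * (1 - m)) \<or> (a < 0 \<and> - a * w2 < k * (1 - m) \<and> c = k * (1 - m) + a * w2)"
proof (cases "a \<ge> 0")
  case True
  have "a + k * (1 - m) > 0"
  proof (cases "a = 0")
    case True
    then have "0 < k * th" using a by simp
    then have "th > 0" using k by (simp add: zero_less_mult_iff)
    then have "(1 - m) / w2 > 0" using th by linarith
    then have "1 - m > 0" using w2 by (simp add: zero_less_divide_iff)
    then show ?thesis using True k by simp
  next
    case False
    then have "a > 0" using \<open>a \<ge> 0\<close> by simp
    moreover have "k * (1 - m) \<ge> 0" using k m by simp
    ultimately show ?thesis by linarith
  qed
  then show ?thesis using True by blast
next
  case False
  have "- a < k * th" using a by simp
  also have "\<dots> \<le> k * ((1 - m) / w2)" using th k by (intro mult_left_mono) auto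
  finally have "- a * w2 < k * (1 - m)" using w2 by (simp add: field_simps)
  then show ?thesis using False by (intro exI[of _ "k * (1 - m) + a * w2"]) auto
qed

lemma part1:
  assumes k: "k > 0" and m: "0 < m" "m \<le> 1" and om: "omega1 DR R S Dr k m \<ge> 0"
    and z: "Re z > - k * min (real_of_ereal (omega1 DR R S Dr k m) / 2) ((1 - m) / omega2 DR R Dr k)"
  shows "z \<in> pencil_resolvent DR R S Dr"
proof (cases "\<forall>x\<in>DR. x = 0")
  case True then show ?thesis by (rule trivial_resolvent)
next
  case False
  then obtain x0 where x0D: "x0 \<in> DR" and x00: "x0 \<noteq> 0" by blast
  define w1 where "w1 = real_of_ereal (omega1 DR R S Dr k m)"
  define w2 where "w2 = omega2 DR R Dr k"
  define B where "B x = scaleC (complex_of_real (1/k)) (S (R x)) - D2rep DR R Dr x" for x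
  have w1x: "w1 * (norm x)^2 \<le> Re (cinner (Dr x) (R x)) / k - (norm x)^2 - (norm (B x))^2 / (4 * m)"
    if xD: "x \<in> DR" and x0: "x \<noteq> 0" for x
  proof -
    let ?q = "(Re (cinner (D1rep DR R Dr x) (R x)) / k - (norm x)^2
        - (norm (scaleC (complex_of_real (1/k)) (S (R x)) - D2rep DR R Dr x))^2 / (4 * m)) / (norm x)^2"
    have "omega1 DR R S Dr k m \<le> ereal ?q"
      unfolding omega1_def using xD x0 by (intro INF_lower) auto
    then have "w1 \<le> ?q" using om unfolding w1_def by (cases "omega1 DR R S Dr k m") auto
    moreover have "(norm x)^2 > 0" using x0 by simp
    ultimately show ?thesis using D1_pair[OF xD] by (simp add: B_def field_simps)
  qed
  have w10: "w1 \<ge> 0" using om unfolding w1_def by (cases "omega1 DR R S Dr k m") auto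
  have d1nn: "Re (cinner (Dr x) (R x)) \<ge> 0" if xD: "x \<in> DR" for x
  proof (cases "x = 0")
    case True then show ?thesis using clin_f0[OF R_lin] by simp
  next
    case False
    have "0 \<le> w1 * (norm x)^2" using w10 by simp
    also have "\<dots> \<le> Re (cinner (Dr x) (R x)) / k - (norm x)^2 - (norm (B x))^2 / (4 * m)" by (rule w1x[OF xD False])
    also have "\<dots> \<le> Re (cinner (Dr x) (R x)) / k"
    proof -
      have "0 \<le> (norm (B x))^2 / (4 * m)" using m by simp
      moreover have "0 \<le> (norm x)^2" by simp
      ultimately show ?thesis by linarith
    qed
    finally show ?thesis using k by (simp add: zero_le_divide_iff)
  qed
  have w2ge: "w2 \<ge> 1"
  proof -
    have "(norm (R x0))^2 + k * Re (cinner (Dr x0) (R x0)) + k^2 * (norm x0)^2 \<le> w2 * (norm (R x0))^2"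
      unfolding w2_def by (rule omega2_bound[OF k x0D x00])
    moreover have "0 \<le> k * Re (cinner (Dr x0) (R x0)) + k^2 * (norm x0)^2" using d1nn[OF x0D] k by simp
    ultimately have "1 * (norm (R x0))^2 \<le> w2 * (norm (R x0))^2" by linarith
    then show ?thesis using Y_pos[OF x0D x00] by (simp add: mult_le_cancel_right)
  qed
  define th where "th = min (w1 / 2) ((1 - m) / w2)"
  have zth: "Re z > - k * th" using z unfolding th_def w1_def w2_def .
  obtain c where c: "c > 0"
    and cb: "(0 \<le> Re z \<and> c = Re z + k * (1 - m)) \<or> (Re z < 0 \<and> - Re z * w2 < k * (1 - m) \<and> c = k * (1 - m) + Re z * w2)"
    using choose_c[OF k m(2) w2ge _ zth] unfolding th_def by auto
  have aw1: "Re z \<ge> - k * w1"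
  proof -
    have "th \<le> w1 / 2" unfolding th_def by (rule min.cobounded1)
    also have "\<dots> \<le> w1" using w10 by simp
    finally have "k * th \<le> k * w1" using k by simp
    then show ?thesis using zth by simp
  qed
  show ?thesis
  proof (rule resolvent_from_coercive[where c=c and \<zeta>="cnj (z + complex_of_real k)"])
    show "c > 0" by (rule c)
    show "\<forall>x\<in>DR. c * (norm (R x))^2 \<le> Re (cnj (z + complex_of_real k) * cinner (pencil_rep DR R S Dr z x) (R x))"
    proof
      fix x assume xD: "x \<in> DR"
      show "c * (norm (R x))^2 \<le> Re (cnj (z + complex_of_real k) * cinner (pencil_rep DR R S Dr z x) (R x))"
      proof (cases "x = 0")
        case True
        then show ?thesis using clin_f0[OF R_lin] by simp
      next
        case False
        let ?X = "(norm x)^2" and ?Y = "(norm (R x))^2" and ?d1 = "Re (cinner (Dr x) (R x))"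
          and ?d2 = "Im (cinner (Dr x) (R x))" and ?s = "Re (cinner (S (R x)) (R x))"
        have tb: "\<bar>Im z * (?s - k * ?d2)\<bar> \<le> (?d1 - k * ?X + Re z * ?X) * (Im z)^2 + m * k * ?Y"
        proof (rule tbound1[where BB="(norm (B x))^2" and wa=w1])
          show "(?s / k - ?d2)^2 \<le> (norm (B x))^2 * ?Y" unfolding B_def by (rule cs_B[OF xD k])
          show "w1 * ?X \<le> ?d1 / k - ?X - (norm (B x))^2 / (4 * m)" by (rule w1x[OF xD False])
        qed (use k m aw1 in auto)
        have "c * ?Y \<le> (?d1 - k * ?X + Re z * ?X) * (Im z)^2 + Im z * (?s - k * ?d2)
            + ((Re z)^2 * (Re z * ?X + k * ?X + ?d1) + k * Re z * ?d1 + (Re z + k) * ?Y)"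
        proof (rule core[where m=m and wb=w2])
          show "?Y + k * ?d1 + k^2 * ?X \<le> w2 * ?Y" unfolding w2_def by (rule omega2_bound[OF k xD False])
        qed (use k m d1nn[OF xD] w2ge tb cb in auto)
        then show ?thesis unfolding coercive_pair[OF xD] .
      qed
    qed
  qed
qed


lemma part2:
  assumes k: "k > 0" and p: "0 < p" and q: "0 < q" and pq: "p + q \<le> 1" and dl: "delta_D DR R Dr > 0"
    and W: "a0 * (real_of_ereal (delta_D DR R Dr) / k - (norm_Stilde DR R S)^2 / (4 * p * k^2)
               - (norm_D2 DR R Dr)^2 / (4 * q)) \<ge> 1"
    and z: "Re z > - k * min ((a0 * (real_of_ereal (delta_D DR R Dr) / k - (norm_Stilde DR R S)^2 / (4 * p * k^2)
               - (norm_D2 DR R Dr)^2 / (4 * q)) - 1) / 2) ((1 - p - q) / omega2 DR R Dr k)"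
  shows "z \<in> pencil_resolvent DR R S Dr"
proof (cases "\<forall>x\<in>DR. x = 0")
  case True then show ?thesis by (rule trivial_resolvent)
next
  case False
  then obtain x0 where x0D: "x0 \<in> DR" and x00: "x0 \<noteq> 0" by blast
  define del where "del = real_of_ereal (delta_D DR R Dr)"
  define NS where "NS = norm_Stilde DR R S"
  define ND where "ND = norm_D2 DR R Dr"
  define W' where "W' = a0 * (del / k - NS^2 / (4 * p * k^2) - ND^2 / (4 * q))"
  define w2 where "w2 = omega2 DR R Dr k"
  have W1: "W' \<ge> 1" using W unfolding W'_def del_def NS_def ND_def .
  have dx: "del * (norm (R x))^2 \<le> Re (cinner (Dr x) (R x))" if xD: "x \<in> DR" and x0: "x \<noteq> 0" for x
  proof -
    let ?q = "Re (cinner (Dr x) (R x)) / (norm (R x))^2"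
    have "delta_D DR R Dr \<le> ereal ?q"
      unfolding delta_D_def using xD x0 by (intro INF_lower) auto
    then have "del \<le> ?q" using dl unfolding del_def by (cases "delta_D DR R Dr") auto
    then show ?thesis using Y_pos[OF xD x0] by (simp add: field_simps)
  qed
  have del0: "del \<ge> 0" using dl unfolding del_def by (cases "delta_D DR R Dr") auto
  have d1nn: "Re (cinner (Dr x) (R x)) \<ge> 0" if xD: "x \<in> DR" for x
  proof (cases "x = 0")
    case True then show ?thesis using clin_f0[OF R_lin] by simp
  next
    case False
    have "0 \<le> del * (norm (R x))^2" using del0 by simp
    then show ?thesis using dx[OF xD False] by linarith
  qed
  have NSb: "norm (S (R x)) \<le> NS * norm (R x)" if xD: "x \<in> DR" and x0: "x \<noteq> 0" for x
  proof -
    have Rp: "norm (R x) > 0" using Y_pos[OF xD x0] by simp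
    have "norm (S (R x)) / norm (R x) \<in> {norm (S (R x)) / norm (R x) | x. x \<in> DR \<and> x \<noteq> 0}" using xD x0 by auto
    moreover have "bdd_above {norm (S (R x)) / norm (R x) | x. x \<in> DR \<and> x \<noteq> 0}"
    proof (intro bdd_aboveI[of _ KS])
      fix r assume "r \<in> {norm (S (R x)) / norm (R x) | x. x \<in> DR \<and> x \<noteq> 0}"
      then obtain y where y: "y \<in> DR" "y \<noteq> 0" "r = norm (S (R y)) / norm (R y)" by auto
      have "norm (R y) > 0" using Y_pos[OF y(1,2)] by simp
      then show "r \<le> KS" using y(3) KS(2)[of "R y"] by (simp add: divide_le_eq)
    qed
    ultimately have "norm (S (R x)) / norm (R x) \<le> NS" unfolding NS_def norm_Stilde_def by (rule cSup_upper)
    then show ?thesis using Rp by (simp add: divide_le_eq)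
  qed
  have NDb: "norm (D2rep DR R Dr x) \<le> ND * norm (R x)" if xD: "x \<in> DR" and x0: "x \<noteq> 0" for x
  proof -
    have Rp: "norm (R x) > 0" using Y_pos[OF xD x0] by simp
    have "norm (D2rep DR R Dr x) / norm (R x) \<in> {norm (D2rep DR R Dr x) / norm (R x) | x. x \<in> DR \<and> x \<noteq> 0}" using xD x0 by auto
    moreover have "bdd_above {norm (D2rep DR R Dr x) / norm (R x) | x. x \<in> DR \<and> x \<noteq> 0}"
    proof (intro bdd_aboveI[of _ CD])
      fix r assume "r \<in> {norm (D2rep DR R Dr x) / norm (R x) | x. x \<in> DR \<and> x \<noteq> 0}"
      then obtain y where y: "y \<in> DR" "y \<noteq> 0" "r = norm (D2rep DR R Dr y) / norm (R y)" by auto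
      have "norm (R y) > 0" using Y_pos[OF y(1,2)] by simp
      then show "r \<le> CD" using y(3) D2_bound[OF y(1)] by (simp add: divide_le_eq)
    qed
    ultimately have "norm (D2rep DR R Dr x) / norm (R x) \<le> ND" unfolding ND_def norm_D2_def by (rule cSup_upper)
    then show ?thesis using Rp by (simp add: divide_le_eq)
  qed
  have w2ge: "w2 \<ge> 1"
  proof -
    have "(norm (R x0))^2 + k * Re (cinner (Dr x0) (R x0)) + k^2 * (norm x0)^2 \<le> w2 * (norm (R x0))^2"
      unfolding w2_def by (rule omega2_bound[OF k x0D x00])
    moreover have "0 \<le> k * Re (cinner (Dr x0) (R x0)) + k^2 * (norm x0)^2" using d1nn[OF x0D] k by simp
    ultimately have "1 * (norm (R x0))^2 \<le> w2 * (norm (R x0))^2" by linarith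
    then show ?thesis using Y_pos[OF x0D x00] by (simp add: mult_le_cancel_right)
  qed
  define th where "th = min ((W' - 1) / 2) ((1 - (p + q)) / w2)"
  have zth: "Re z > - k * th" using z unfolding th_def W'_def del_def NS_def ND_def w2_def by (simp add: diff_diff_eq)
  obtain c where c: "c > 0"
    and cb: "(0 \<le> Re z \<and> c = Re z + k * (1 - (p + q))) \<or> (Re z < 0 \<and> - Re z * w2 < k * (1 - (p + q)) \<and> c = k * (1 - (p + q)) + Re z * w2)"
    using choose_c[OF k pq w2ge _ zth] unfolding th_def by auto
  have aW: "Re z \<ge> - k * (W' - 1)"
  proof -
    have "th \<le> (W' - 1) / 2" unfolding th_def by (rule min.cobounded1)
    also have "\<dots> \<le> W' - 1" using W1 by simp
    finally have "k * th \<le> k * (W' - 1)" using k by (intro mult_left_mono) auto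
    then show ?thesis using zth by simp
  qed
  show ?thesis
  proof (rule resolvent_from_coercive[where c=c and \<zeta>="cnj (z + complex_of_real k)"])
    show "c > 0" by (rule c)
    show "\<forall>x\<in>DR. c * (norm (R x))^2 \<le> Re (cnj (z + complex_of_real k) * cinner (pencil_rep DR R S Dr z x) (R x))"
    proof
      fix x assume xD: "x \<in> DR"
      show "c * (norm (R x))^2 \<le> Re (cnj (z + complex_of_real k) * cinner (pencil_rep DR R S Dr z x) (R x))"
      proof (cases "x = 0")
        case True
        then show ?thesis using clin_f0[OF R_lin] by simp
      next
        case False
        let ?X = "(norm x)^2" and ?Y = "(norm (R x))^2" and ?d1 = "Re (cinner (Dr x) (R x))"
          and ?d2 = "Im (cinner (Dr x) (R x))" and ?s = "Re (cinner (S (R x)) (R x))"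
        have sb: "\<bar>?s\<bar> \<le> NS * ?Y"
        proof -
          have "\<bar>?s\<bar> \<le> cmod (cinner (S (R x)) (R x))" by (rule abs_Re_le_cmod)
          also have "\<dots> \<le> norm (S (R x)) * norm (R x)" by (rule cinner_cs)
          also have "\<dots> \<le> NS * norm (R x) * norm (R x)" using NSb[OF xD False] by (intro mult_right_mono) auto
          finally show ?thesis by (simp add: power2_eq_square mult.assoc)
        qed
        have db: "\<bar>?d2\<bar> \<le> ND * ?Y"
        proof -
          have "\<bar>?d2\<bar> = cmod (cinner (D2rep DR R Dr x) (R x))" using D2_pair[OF xD] by simp
          also have "\<dots> \<le> norm (D2rep DR R Dr x) * norm (R x)" by (rule cinner_cs)
          also have "\<dots> \<le> ND * norm (R x) * norm (R x)" using NDb[OF xD False] by (intro mult_right_mono) auto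
          finally show ?thesis by (simp add: power2_eq_square mult.assoc)
        qed
        have tb: "\<bar>Im z * ?s - k * Im z * ?d2\<bar> \<le> (?d1 - k * ?X + Re z * ?X) * (Im z)^2 + (p + q) * k * ?Y"
        proof (rule tbound2[of k p q ?X ?Y a0 ?s NS ?d2 ND del ?d1 "Re z" "Im z"])
          show "a0 * (del / k - NS^2 / (4 * p * k^2) - ND^2 / (4 * q)) \<ge> 1" using W1 unfolding W'_def .
          show "Re z \<ge> - k * (a0 * (del / k - NS^2 / (4 * p * k^2) - ND^2 / (4 * q)) - 1)" using aW unfolding W'_def .
        qed (use k p q a0_pos sb db dx[OF xD False] R_lower[OF xD] in auto)
        have "c * ?Y \<le> (?d1 - k * ?X + Re z * ?X) * (Im z)^2 + Im z * (?s - k * ?d2)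
            + ((Re z)^2 * (Re z * ?X + k * ?X + ?d1) + k * Re z * ?d1 + (Re z + k) * ?Y)"
        proof (rule core[where m="p + q" and wb=w2])
          show "?Y + k * ?d1 + k^2 * ?X \<le> w2 * ?Y" unfolding w2_def by (rule omega2_bound[OF k xD False])
          show "\<bar>Im z * (?s - k * ?d2)\<bar> \<le> (?d1 - k * ?X + Re z * ?X) * (Im z)^2 + (p + q) * k * ?Y"
            using tb by (simp add: algebra_simps)
        qed (use k p q pq d1nn[OF xD] w2ge cb in auto)
        then show ?thesis unfolding coercive_pair[OF xD] .
      qed
    qed
  qed
qed

end

theorem mainTheorem7:
  fixes DA DT DR :: "'h::{complex_inner, complete_space} set"
    and A T R S Dr :: "'h \<Rightarrow> 'h"
    and a0 :: real
  assumes A_msect: "m_sectorial DA A"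
    and a0_pos: "a0 > 0"
    and A_coerc: "\<forall>x\<in>DA. a0 * (norm x)^2 \<le> Re (cinner (A x) x)"
    and T_sa: "selfadjoint_op DT T"
    and T_ge: "\<forall>x\<in>DT. a0 * (norm x)^2 \<le> Re (cinner (T x) x)"
    and R_sqrt: "is_op_sqrt DT T DR R"
    and S_sa: "bounded_selfadjoint S"
    and A_dom: "DA = {x \<in> DR. R x + scaleC \<i> (S (R x)) \<in> DR}"
    and A_eq: "\<forall>x\<in>DA. A x = R (R x + scaleC \<i> (S (R x)))"
    and D_bdd: "bounded_1_m1 DR R Dr"
  shows
    "(\<forall>k m. beta_D DR R Dr > 0 \<and> 0 < k \<and> ereal k < beta_D DR R Dr \<and> 0 < m \<and> m \<le> 1
        \<and> omega1 DR R S Dr k m \<ge> 0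
      \<longrightarrow> pencil_spectrum DR R S Dr \<subseteq>
          {z. Re z \<le> - k * min (real_of_ereal (omega1 DR R S Dr k m) / 2) ((1 - m) / omega2 DR R Dr k)})
   \<and> (\<forall>k p q. delta_D DR R Dr > 0 \<and> 0 < k \<and> ereal k < beta_D DR R Dr \<and> 0 < p \<and> 0 < q \<and> p + q \<le> 1
        \<and> a0 * (real_of_ereal (delta_D DR R Dr) / k - (norm_Stilde DR R S)^2 / (4 * p * k^2)
               - (norm_D2 DR R Dr)^2 / (4 * q)) \<ge> 1
      \<longrightarrow> pencil_spectrum DR R S Dr \<subseteq>
          {z. Re z \<le> - k * min ((a0 * (real_of_ereal (delta_D DR R Dr) / k - (norm_Stilde DR R S)^2 / (4 * p * k^2)
               - (norm_D2 DR R Dr)^2 / (4 * q)) - 1) / 2) ((1 - p - q) / omega2 DR R Dr k)})"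
proof -
  interpret setting DT DR T R S Dr a0
    using a0_pos T_sa T_ge R_sqrt S_sa D_bdd by unfold_locales
  show ?thesis
  proof (intro conjI allI impI)
    fix k m
    assume h: "beta_D DR R Dr > 0 \<and> 0 < k \<and> ereal k < beta_D DR R Dr \<and> 0 < m \<and> m \<le> 1
        \<and> omega1 DR R S Dr k m \<ge> 0"
    show "pencil_spectrum DR R S Dr \<subseteq>
          {z. Re z \<le> - k * min (real_of_ereal (omega1 DR R S Dr k m) / 2) ((1 - m) / omega2 DR R Dr k)}"
    proof
      fix z assume "z \<in> pencil_spectrum DR R S Dr"
      then have nr: "z \<notin> pencil_resolvent DR R S Dr" by (simp add: pencil_spectrum_def)
      show "z \<in> {z. Re z \<le> - k * min (real_of_ereal (omega1 DR R S Dr k m) / 2) ((1 - m) / omega2 DR R Dr k)}"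
      proof (rule ccontr)
        assume "z \<notin> {z. Re z \<le> - k * min (real_of_ereal (omega1 DR R S Dr k m) / 2) ((1 - m) / omega2 DR R Dr k)}"
        then have "Re z > - k * min (real_of_ereal (omega1 DR R S Dr k m) / 2) ((1 - m) / omega2 DR R Dr k)" by simp
        then have "z \<in> pencil_resolvent DR R S Dr" using h by (intro part1) auto
        then show False using nr by simp
      qed
    qed
  next
    fix k p q
    assume h: "delta_D DR R Dr > 0 \<and> 0 < k \<and> ereal k < beta_D DR R Dr \<and> 0 < p \<and> 0 < q \<and> p + q \<le> 1
        \<and> a0 * (real_of_ereal (delta_D DR R Dr) / k - (norm_Stilde DR R S)^2 / (4 * p * k^2)
               - (norm_D2 DR R Dr)^2 / (4 * q)) \<ge> 1"
    let ?W = "a0 * (real_of_ereal (delta_D DR R Dr) / k - (norm_Stilde DR R S)^2 / (4 * p * k^2)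
               - (norm_D2 DR R Dr)^2 / (4 * q))"
    show "pencil_spectrum DR R S Dr \<subseteq> {z. Re z \<le> - k * min ((?W - 1) / 2) ((1 - p - q) / omega2 DR R Dr k)}"
    proof
      fix z assume "z \<in> pencil_spectrum DR R S Dr"
      then have nr: "z \<notin> pencil_resolvent DR R S Dr" by (simp add: pencil_spectrum_def)
      show "z \<in> {z. Re z \<le> - k * min ((?W - 1) / 2) ((1 - p - q) / omega2 DR R Dr k)}"
      proof (rule ccontr)
        assume "z \<notin> {z. Re z \<le> - k * min ((?W - 1) / 2) ((1 - p - q) / omega2 DR R Dr k)}"
        then have "Re z > - k * min ((?W - 1) / 2) ((1 - p - q) / omega2 DR R Dr k)" by simp
        then have "z \<in> pencil_resolvent DR R S Dr" using h by (intro part2) auto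
        then show False using nr by simp
      qed
    qed
  qed
qed

end
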